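(* If $G$ and $H$ are two connected graphs with $\mathrm{toi}(G)=\mathrm{toi}(H)=3$, then $\mathrm{toi}(G \square H) \geq 4$. Furthermore, equality holds when $G=H=K_3$.
   Context: $\mathrm{toi}(G)$ is the maximum $t$ such that $G$ contains a totally odd strong immersion of $K_t$ (an injective map of $V(K_t)$ into $V(G)$ with pairwise edge-disjoint odd paths joining each pair of terminals, no terminal being an interior vertex of any path). $G\square H$ is the Cartesian product: vertex set $V(G)\times V(H)$, with $(g_1,h_1)\sim(g_2,h_2)$ iff ($g_1=g_2$ and $h_1h_2\in E(H)$) or ($h_1=h_2$ and $g_1g_2\in E(G)$). *)

theory Defs
  imports Main
begin

text \<open>A graph is a pair (vertex set, edge set); edges are 2-element vertex sets.\<close>
type_synonym 'a graph = "'a set \<times> 'a set set"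

definition verts :: "'a graph \<Rightarrow> 'a set" where "verts G = fst G"
definition edges :: "'a graph \<Rightarrow> 'a set set" where "edges G = snd G"

definition simple_graph :: "'a graph \<Rightarrow> bool" where
  "simple_graph G \<longleftrightarrow> finite (verts G) \<and>
     (\<forall>e\<in>edges G. \<exists>u v. e = {u, v} \<and> u \<noteq> v \<and> u \<in> verts G \<and> v \<in> verts G)"

definition is_path :: "'a graph \<Rightarrow> 'a list \<Rightarrow> bool" where
  "is_path G p \<longleftrightarrow> p \<noteq> [] \<and> distinct p \<and> set p \<subseteq> verts G \<and>
     (\<forall>i. Suc i < length p \<longrightarrow> {p ! i, p ! Suc i} \<in> edges G)"

definition path_edges :: "'a list \<Rightarrow> 'a set set" where
  "path_edges p = {{p ! i, p ! Suc i} | i. Suc i < length p}"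

definition interior :: "'a list \<Rightarrow> 'a set" where
  "interior p = set (butlast (tl p))"

definition connected_graph :: "'a graph \<Rightarrow> bool" where
  "connected_graph G \<longleftrightarrow> verts G \<noteq> {} \<and>
     (\<forall>u\<in>verts G. \<forall>v\<in>verts G. \<exists>p. is_path G p \<and> hd p = u \<and> last p = v)"

definition toi_immersion :: "'a graph \<Rightarrow> nat \<Rightarrow> (nat \<Rightarrow> 'a) \<Rightarrow> (nat \<Rightarrow> nat \<Rightarrow> 'a list) \<Rightarrow> bool" where
  "toi_immersion G t f P \<longleftrightarrow>
     inj_on f {..<t} \<and> f ` {..<t} \<subseteq> verts G \<and>
     (\<forall>i j. i < j \<and> j < t \<longrightarrow>
        is_path G (P i j) \<and> hd (P i j) = f i \<and> last (P i j) = f j \<and>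
        odd (length (P i j) - 1) \<and> (\<forall>k<t. f k \<notin> interior (P i j))) \<and>
     (\<forall>i j k l. i < j \<and> j < t \<and> k < l \<and> l < t \<and> (i, j) \<noteq> (k, l) \<longrightarrow>
        path_edges (P i j) \<inter> path_edges (P k l) = {})"

definition has_toi :: "'a graph \<Rightarrow> nat \<Rightarrow> bool" where
  "has_toi G t \<longleftrightarrow> (\<exists>f P. toi_immersion G t f P)"

definition toi :: "'a graph \<Rightarrow> nat" where
  "toi G = Max {t. has_toi G t}"

definition cart_prod :: "'a graph \<Rightarrow> 'b graph \<Rightarrow> ('a \<times> 'b) graph" where
  "cart_prod G H = (verts G \<times> verts H,
     {{(g, h1), (g, h2)} | g h1 h2. g \<in> verts G \<and> {h1, h2} \<in> edges H} \<union>
     {{(g1, h), (g2, h)} | g1 g2 h. h \<in> verts H \<and> {g1, g2} \<in> edges G})"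

definition K3 :: "nat graph" where
  "K3 = ({0, 1, 2}, {{0, 1}, {0, 2}, {1, 2}})"

end

theory Submission
  imports Defs
begin

lemma tl_rev': "tl (rev xs) = rev (butlast xs)"
  by (metis butlast_rev rev_rev_ident)

lemma path_edges_rev_sub: "path_edges (rev q) \<subseteq> path_edges q"
proof
  fix e assume "e \<in> path_edges (rev q)"
  then obtain i where i: "Suc i < length q" "e = {rev q ! i, rev q ! Suc i}"
    unfolding path_edges_def by auto
  let ?j = "length q - 2 - i"
  have "Suc ?j < length q" using i by auto
  moreover have "e = {q ! ?j, q ! Suc ?j}" using i
    by (auto simp: rev_nth Suc_diff_Suc numeral_2_eq_2)
  ultimately show "e \<in> path_edges q" unfolding path_edges_def by blast
qed

lemma path_edges_rev: "path_edges (rev p) = path_edges p"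
  by (metis path_edges_rev_sub rev_rev_ident subset_antisym)

lemma interior_rev: "interior (rev p) = interior p"
  unfolding interior_def by (simp add: tl_rev' butlast_tl)

lemma is_path_rev: "is_path G (rev p) = is_path G p"
proof -
  { fix q assume q: "is_path G q"
    have "is_path G (rev q)" unfolding is_path_def
    proof (intro conjI allI impI)
      show "rev q \<noteq> []" "distinct (rev q)" "set (rev q) \<subseteq> verts G" using q by (auto simp: is_path_def)
      fix i assume "Suc i < length (rev q)"
      then have "{rev q ! i, rev q ! Suc i} \<in> path_edges (rev q)" unfolding path_edges_def by blast
      then have "{rev q ! i, rev q ! Suc i} \<in> path_edges q" by (simp add: path_edges_rev)
      then show "{rev q ! i, rev q ! Suc i} \<in> edges G" using q unfolding path_edges_def is_path_def by auto
    qed }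
  then show ?thesis by (metis rev_rev_ident)
qed

lemma path_edges_subset: "is_path G p \<Longrightarrow> path_edges p \<subseteq> edges G"
  unfolding is_path_def path_edges_def by auto

lemma nth_interior: assumes a: "0 < i" "Suc i < length p" shows "p ! i \<in> interior p"
proof -
  have "butlast (tl p) ! (i - 1) = p ! i" using a by (simp add: nth_butlast nth_tl)
  moreover have "i - 1 < length (butlast (tl p))" using a by simp
  ultimately show ?thesis unfolding interior_def by (metis nth_mem)
qed

lemma path_edges_Nil[simp]: "path_edges [] = {}" by (simp add: path_edges_def)
lemma path_edges_single[simp]: "path_edges [a] = {}" by (simp add: path_edges_def)
lemma path_edges_Cons2[simp]: "path_edges (a # b # r) = insert {a,b} (path_edges (b # r))"
proof -
  have "path_edges (a # b # r) = (\<lambda>i. {(a#b#r) ! i, (a#b#r) ! Suc i}) ` {i. Suc i < length (a#b#r)}"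
    unfolding path_edges_def by blast
  also have "{i. Suc i < length (a#b#r)} = insert 0 (Suc ` {i. Suc i < length (b#r)})"
    by (auto simp: image_iff) (metis Suc_less_eq not0_implies_Suc)
  also have "(\<lambda>i. {(a#b#r) ! i, (a#b#r) ! Suc i}) ` insert 0 (Suc ` {i. Suc i < length (b#r)})
     = insert {a,b} ((\<lambda>i. {(b#r) ! i, (b#r) ! Suc i}) ` {i. Suc i < length (b#r)})"
    by (simp add: image_image)
  also have "(\<lambda>i. {(b#r) ! i, (b#r) ! Suc i}) ` {i. Suc i < length (b#r)} = path_edges (b#r)"
    unfolding path_edges_def by blast
  finally show ?thesis .
qed

lemma path_edges_append: "p \<noteq> [] \<Longrightarrow> q \<noteq> [] \<Longrightarrow> last p = hd q \<Longrightarrow>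
  path_edges (p @ tl q) = path_edges p \<union> path_edges q"
proof (induction p rule: induct_list012)
  case 1 then show ?case by simp
next
  case (2 x) then show ?case by (cases q) auto
next
  case (3 x y zs) then show ?case by auto
qed

lemma interior_append: "p \<noteq> [] \<Longrightarrow> last p = hd q \<Longrightarrow>
  interior (p @ tl q) \<subseteq> interior p \<union> {last p} \<union> interior q"
proof -
  assume p: "p \<noteq> []" and l: "last p = hd q"
  have tlp: "set (tl p) \<subseteq> interior p \<union> {last p}"
  proof (cases "tl p = []")
    case True then show ?thesis by simp
  next
    case False
    then have "set (tl p) = set (butlast (tl p) @ [last (tl p)])" by simp
    also have "\<dots> = interior p \<union> {last (tl p)}" unfolding interior_def by simp
    also have "last (tl p) = last p" using False p by (simp add: last_tl)
    finally show ?thesis by simp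
  qed
  have "tl (p @ tl q) = tl p @ tl q" using p by simp
  then have "interior (p @ tl q) = set (butlast (tl p @ tl q))" by (simp add: interior_def)
  also have "\<dots> \<subseteq> set (tl p) \<union> set (butlast (tl q))"
    by (auto simp: butlast_append dest: in_set_butlastD)
  finally show ?thesis using tlp unfolding interior_def by blast
qed

lemma is_path_iff: "is_path G p \<longleftrightarrow> p \<noteq> [] \<and> distinct p \<and> set p \<subseteq> verts G \<and> path_edges p \<subseteq> edges G"
  unfolding is_path_def path_edges_def by blast

lemma is_path_append:
  assumes "is_path G p" "is_path G q" "last p = hd q" "set p \<inter> set q \<subseteq> {hd q}"
  shows "is_path G (p @ tl q)"
proof -
  have ne: "p \<noteq> []" "q \<noteq> []" using assms(1,2) by (simp_all add: is_path_def)
  have dq: "distinct q" using assms(2) by (simp add: is_path_def)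
  have h: "hd q \<notin> set (tl q)" using ne dq by (cases q) auto
  have st: "set (tl q) \<subseteq> set q" using ne by (cases q) auto
  have "set p \<inter> set (tl q) = {}" using assms(4) h st by blast
  moreover have "distinct (tl q)" using dq by (simp add: distinct_tl)
  moreover have "distinct p" using assms(1) by (simp add: is_path_def)
  ultimately have d: "distinct (p @ tl q)" by simp
  have v: "set (p @ tl q) \<subseteq> verts G" using assms(1,2) st by (auto simp: is_path_def)
  have e: "path_edges (p @ tl q) \<subseteq> edges G"
    using path_edges_append[OF ne assms(3)] path_edges_subset[OF assms(1)] path_edges_subset[OF assms(2)] by simp
  show ?thesis unfolding is_path_iff using d v e ne by simp
qed

lemma last_append_tl: "p \<noteq> [] \<Longrightarrow> q \<noteq> [] \<Longrightarrow> last p = hd q \<Longrightarrow> last (p @ tl q) = last q"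
  by (cases q) auto
lemma length_append_tl: "q \<noteq> [] \<Longrightarrow> p \<noteq> [] \<Longrightarrow> length (p @ tl q) - 1 = (length p - 1) + (length q - 1)"
  by (cases q; cases p) auto

lemma path_edges_map: "path_edges (map g p) = (\<lambda>e. g ` e) ` path_edges p"
  by (induction p rule: induct_list012) auto

lemma interior_map: "interior (map g p) = g ` interior p"
  unfolding interior_def by (simp add: map_tl[symmetric] map_butlast[symmetric])

lemma cp_edgeG: "{x, y} \<in> edges G \<Longrightarrow> b \<in> verts H \<Longrightarrow> {(x, b), (y, b)} \<in> edges (cart_prod G H)"
  unfolding cart_prod_def edges_def by auto
lemma cp_edgeH: "{x, y} \<in> edges H \<Longrightarrow> a \<in> verts G \<Longrightarrow> {(a, x), (a, y)} \<in> edges (cart_prod G H)"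
  unfolding cart_prod_def edges_def by auto
lemma cp_verts: "verts (cart_prod G H) = verts G \<times> verts H"
  unfolding cart_prod_def verts_def by simp

lemma is_path_mapG:
  assumes "is_path G p" "b \<in> verts H"
  shows "is_path (cart_prod G H) (map (\<lambda>x. (x, b)) p)"
  unfolding is_path_def
proof (intro conjI allI impI)
  show "map (\<lambda>x. (x, b)) p \<noteq> []" "distinct (map (\<lambda>x. (x, b)) p)"
    using assms by (auto simp: is_path_def distinct_map inj_on_def)
  show "set (map (\<lambda>x. (x, b)) p) \<subseteq> verts (cart_prod G H)"
    using assms by (auto simp: is_path_def cp_verts)
  fix i assume i: "Suc i < length (map (\<lambda>x. (x, b)) p)"
  then have "{p ! i, p ! Suc i} \<in> edges G" using assms by (auto simp: is_path_def)
  then show "{map (\<lambda>x. (x, b)) p ! i, map (\<lambda>x. (x, b)) p ! Suc i} \<in> edges (cart_prod G H)"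
    using i assms(2) cp_edgeG by simp
qed

lemma is_path_mapH:
  assumes "is_path H q" "a \<in> verts G"
  shows "is_path (cart_prod G H) (map (\<lambda>y. (a, y)) q)"
  unfolding is_path_def
proof (intro conjI allI impI)
  show "map (\<lambda>y. (a, y)) q \<noteq> []" "distinct (map (\<lambda>y. (a, y)) q)"
    using assms by (auto simp: is_path_def distinct_map inj_on_def)
  show "set (map (\<lambda>y. (a, y)) q) \<subseteq> verts (cart_prod G H)"
    using assms by (auto simp: is_path_def cp_verts)
  fix i assume i: "Suc i < length (map (\<lambda>y. (a, y)) q)"
  then have "{q ! i, q ! Suc i} \<in> edges H" using assms by (auto simp: is_path_def)
  then show "{map (\<lambda>y. (a, y)) q ! i, map (\<lambda>y. (a, y)) q ! Suc i} \<in> edges (cart_prod G H)"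
    using i assms(2) cp_edgeH by simp
qed

definition GE :: "'b \<Rightarrow> 'a list \<Rightarrow> ('a \<times> 'b) set set" where
  "GE b p = (\<lambda>e. (\<lambda>x. (x, b)) ` e) ` path_edges p"
definition HE :: "'a \<Rightarrow> 'b list \<Rightarrow> ('a \<times> 'b) set set" where
  "HE a q = (\<lambda>e. (\<lambda>y. (a, y)) ` e) ` path_edges q"

lemma path_edge_two: "distinct p \<Longrightarrow> e \<in> path_edges p \<Longrightarrow> \<exists>x y. x \<noteq> y \<and> e = {x, y}"
proof -
  assume d: "distinct p" and "e \<in> path_edges p"
  then obtain i where i: "Suc i < length p" "e = {p ! i, p ! Suc i}" unfolding path_edges_def by auto
  then have "p ! i \<noteq> p ! Suc i" using d by (simp add: nth_eq_iff_index_eq)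
  then show ?thesis using i by blast
qed

lemma GE_HE_disj: "distinct p \<Longrightarrow> distinct q \<Longrightarrow> GE b p \<inter> HE a q = {}"
proof (rule ccontr)
  assume dp: "distinct p" and dq: "distinct q" and "GE b p \<inter> HE a q \<noteq> {}"
  then obtain e1 e2 where e1: "e1 \<in> path_edges p" and e2: "e2 \<in> path_edges q"
    and eq: "(\<lambda>x. (x, b)) ` e1 = (\<lambda>y. (a, y)) ` e2" unfolding GE_def HE_def by blast
  obtain x y where "x \<noteq> y" "e1 = {x, y}" using path_edge_two[OF dp e1] by blast
  moreover obtain u v where "u \<noteq> v" "e2 = {u, v}" using path_edge_two[OF dq e2] by blast
  ultimately show False using eq by (auto simp: doubleton_eq_iff)
qed

lemma GE_lvl_disj: "b \<noteq> b' \<Longrightarrow> distinct p \<Longrightarrow> GE b p \<inter> GE b' p' = {}"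
proof (rule ccontr)
  assume bb: "b \<noteq> b'" and dp: "distinct p" and "GE b p \<inter> GE b' p' \<noteq> {}"
  then obtain e1 e2 where e1: "e1 \<in> path_edges p" and eq: "(\<lambda>x. (x, b)) ` e1 = (\<lambda>x. (x, b')) ` e2"
    unfolding GE_def by blast
  obtain x y where "x \<noteq> y" "e1 = {x, y}" using path_edge_two[OF dp e1] by blast
  then have "(x, b) \<in> (\<lambda>x. (x, b')) ` e2" using eq by blast
  then show False using bb by auto
qed

lemma HE_lvl_disj: "a \<noteq> a' \<Longrightarrow> distinct q \<Longrightarrow> HE a q \<inter> HE a' q' = {}"
proof (rule ccontr)
  assume bb: "a \<noteq> a'" and dp: "distinct q" and "HE a q \<inter> HE a' q' \<noteq> {}"
  then obtain e1 e2 where e1: "e1 \<in> path_edges q" and eq: "(\<lambda>y. (a, y)) ` e1 = (\<lambda>y. (a', y)) ` e2"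
    unfolding HE_def by blast
  obtain x y where "x \<noteq> y" "e1 = {x, y}" using path_edge_two[OF dp e1] by blast
  then have "(a, x) \<in> (\<lambda>y. (a', y)) ` e2" using eq by blast
  then show False using bb by auto
qed

lemma GE_same_disj: "path_edges p \<inter> path_edges p' = {} \<Longrightarrow> GE b p \<inter> GE b p' = {}"
proof -
  have inj: "inj (\<lambda>e. (\<lambda>x. (x, b)) ` e)" by (rule injI) (auto simp: image_iff) 
  assume "path_edges p \<inter> path_edges p' = {}"
  then show ?thesis unfolding GE_def using inj by (metis image_Int image_empty)
qed

lemma HE_same_disj: "path_edges q \<inter> path_edges q' = {} \<Longrightarrow> HE a q \<inter> HE a q' = {}"
proof -
  have inj: "inj (\<lambda>e. (\<lambda>y. (a, y)) ` e)" by (rule injI) (auto simp: image_iff) 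
  assume "path_edges q \<inter> path_edges q' = {}"
  then show ?thesis unfolding HE_def using inj by (metis image_Int image_empty)
qed

lemma join3:
  assumes p: "is_path X p1" "is_path X p2" "is_path X p3"
    and l: "last p1 = hd p2" "last p2 = hd p3"
    and s: "set p1 \<inter> set p2 \<subseteq> {hd p2}" "set p1 \<inter> set p3 = {}" "set p2 \<inter> set p3 \<subseteq> {hd p3}"
  shows "is_path X ((p1 @ tl p2) @ tl p3)"
    and "hd ((p1 @ tl p2) @ tl p3) = hd p1"
    and "last ((p1 @ tl p2) @ tl p3) = last p3"
    and "length ((p1 @ tl p2) @ tl p3) - 1 = (length p1 - 1) + (length p2 - 1) + (length p3 - 1)"
    and "path_edges ((p1 @ tl p2) @ tl p3) = path_edges p1 \<union> path_edges p2 \<union> path_edges p3"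
    and "interior ((p1 @ tl p2) @ tl p3) \<subseteq> interior p1 \<union> interior p2 \<union> interior p3 \<union> {last p1, last p2}"
proof -
  have ne: "p1 \<noteq> []" "p2 \<noteq> []" "p3 \<noteq> []" using p by (auto simp: is_path_def)
  have p12: "is_path X (p1 @ tl p2)" using is_path_append[OF p(1,2) l(1) s(1)] .
  have ne12: "p1 @ tl p2 \<noteq> []" using ne by simp
  have last12: "last (p1 @ tl p2) = last p2" using last_append_tl[OF ne(1,2) l(1)] .
  have st2: "set (tl p2) \<subseteq> set p2" using ne by (cases p2) auto
  have "set (p1 @ tl p2) \<inter> set p3 \<subseteq> {hd p3}" using s st2 by auto
  then show "is_path X ((p1 @ tl p2) @ tl p3)"
    using is_path_append[OF p12 p(3)] last12 l(2) by simp
  show "hd ((p1 @ tl p2) @ tl p3) = hd p1" using ne by simp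
  show "last ((p1 @ tl p2) @ tl p3) = last p3" using last_append_tl[OF ne12 ne(3)] last12 l(2) by simp
  show "length ((p1 @ tl p2) @ tl p3) - 1 = (length p1 - 1) + (length p2 - 1) + (length p3 - 1)"
    using length_append_tl[OF ne(3) ne12] length_append_tl[OF ne(2) ne(1)] by simp
  show "path_edges ((p1 @ tl p2) @ tl p3) = path_edges p1 \<union> path_edges p2 \<union> path_edges p3"
    using path_edges_append[OF ne12 ne(3)] path_edges_append[OF ne(1,2) l(1)] last12 l(2) by simp
  show "interior ((p1 @ tl p2) @ tl p3) \<subseteq> interior p1 \<union> interior p2 \<union> interior p3 \<union> {last p1, last p2}"
    using interior_append[OF ne12, of p3] interior_append[OF ne(1) l(1)] last12 l(2) by auto
qed

lemma HE_GE_disj: "distinct p \<Longrightarrow> distinct q \<Longrightarrow> HE a q \<inter> GE b p = {}"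
  by (metis GE_HE_disj Int_commute)

lemma path_edges_mG: "path_edges (map (\<lambda>x. (x, b)) p) = GE b p"
  unfolding GE_def by (simp add: path_edges_map)
lemma path_edges_mH: "path_edges (map (\<lambda>y. (a, y)) p) = HE a p"
  unfolding HE_def by (simp add: path_edges_map)

lemma GE_rev[simp]: "GE b (rev p) = GE b p" unfolding GE_def by (simp add: path_edges_rev)
lemma HE_rev[simp]: "HE a (rev p) = HE a p" unfolding HE_def by (simp add: path_edges_rev)

lemma single_H:
  assumes "is_path H q" "a \<in> verts G" "q \<noteq> []" "odd (length q - 1)" "\<forall>y\<in>B. y \<notin> interior q"
  shows "is_path (cart_prod G H) (map (\<lambda>y. (a, y)) q) \<and> hd (map (\<lambda>y. (a, y)) q) = (a, hd q) \<and>
    last (map (\<lambda>y. (a, y)) q) = (a, last q) \<and> odd (length (map (\<lambda>y. (a, y)) q) - 1) \<and>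
    (\<forall>z \<in> A \<times> B. z \<notin> interior (map (\<lambda>y. (a, y)) q))"
  using assms is_path_mapH[OF assms(1,2)] by (auto simp: hd_map last_map interior_map)

lemma single_G:
  assumes "is_path G p" "b \<in> verts H" "p \<noteq> []" "odd (length p - 1)" "\<forall>x\<in>A. x \<notin> interior p"
  shows "is_path (cart_prod G H) (map (\<lambda>x. (x, b)) p) \<and> hd (map (\<lambda>x. (x, b)) p) = (hd p, b) \<and>
    last (map (\<lambda>x. (x, b)) p) = (last p, b) \<and> odd (length (map (\<lambda>x. (x, b)) p) - 1) \<and>
    (\<forall>z \<in> A \<times> B. z \<notin> interior (map (\<lambda>x. (x, b)) p))"
  using assms is_path_mapG[OF assms(1,2)] by (auto simp: hd_map last_map interior_map)

lemma K4_construction: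
  fixes G :: "'a graph" and H :: "'b graph"
  assumes da: "a0 \<noteq> a1" "a0 \<noteq> a2" "a1 \<noteq> a2" and db: "b0 \<noteq> b1" "b0 \<noteq> b2" "b1 \<noteq> b2"
    and va: "a0 \<in> verts G" "a1 \<in> verts G" "a2 \<in> verts G"
    and vb: "b0 \<in> verts H" "b1 \<in> verts H" "b2 \<in> verts H"
    and pP: "is_path G P01" "is_path G P02" "is_path G P12"
    and hP: "hd P01 = a0" "last P01 = a1" "hd P02 = a0" "last P02 = a2" "hd P12 = a1" "last P12 = a2"
    and oP: "odd (length P01 - 1)" "odd (length P02 - 1)" "odd (length P12 - 1)"
    and iP: "\<forall>x\<in>{a0,a1,a2}. x \<notin> interior P01 \<and> x \<notin> interior P02 \<and> x \<notin> interior P12"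
    and dP: "path_edges P01 \<inter> path_edges P02 = {}" "path_edges P01 \<inter> path_edges P12 = {}"
       "path_edges P02 \<inter> path_edges P12 = {}"
    and pQ: "is_path H Q01" "is_path H Q02" "is_path H Q12"
    and hQ: "hd Q01 = b0" "last Q01 = b1" "hd Q02 = b0" "last Q02 = b2" "hd Q12 = b1" "last Q12 = b2"
    and oQ: "odd (length Q01 - 1)" "odd (length Q02 - 1)" "odd (length Q12 - 1)"
    and iQ: "\<forall>x\<in>{b0,b1,b2}. x \<notin> interior Q01 \<and> x \<notin> interior Q02 \<and> x \<notin> interior Q12"
    and dQ: "path_edges Q01 \<inter> path_edges Q02 = {}" "path_edges Q01 \<inter> path_edges Q12 = {}"
       "path_edges Q02 \<inter> path_edges Q12 = {}"
  shows "has_toi (cart_prod G H) 4"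
proof -
  let ?X = "cart_prod G H"
  define A1 where "A1 = map (\<lambda>y. (a0, y)) Q02"
  define A2 where "A2 = map (\<lambda>x. (x, b2)) P01"
  define A3 where "A3 = map (\<lambda>y. (a1, y)) (rev Q12)"
  define C1 where "C1 = map (\<lambda>x. (x, b1)) P02"
  define C2 where "C2 = map (\<lambda>y. (a2, y)) (rev Q01)"
  define C3 where "C3 = map (\<lambda>x. (x, b0)) (rev P12)"
  define R03 where "R03 = (A1 @ tl A2) @ tl A3"
  define R12 where "R12 = (C1 @ tl C2) @ tl C3"
  define F :: "nat \<Rightarrow> 'a \<times> 'b" where "F i = [(a0,b0),(a0,b1),(a1,b0),(a1,b1)] ! i" for i
  define PP where "PP i j = (if (i,j) = (0::nat,1::nat) then map (\<lambda>y. (a0, y)) Q01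
     else if (i,j) = (0,2) then map (\<lambda>x. (x, b0)) P01
     else if (i,j) = (0,3) then R03
     else if (i,j) = (1,2) then R12
     else if (i,j) = (1,3) then map (\<lambda>x. (x, b1)) P01
     else map (\<lambda>y. (a1, y)) Q01)" for i j
  have neP: "P01 \<noteq> []" "P02 \<noteq> []" "P12 \<noteq> []" "Q01 \<noteq> []" "Q02 \<noteq> []" "Q12 \<noteq> []"
    using pP pQ by (auto simp: is_path_def)
  have dsP: "distinct P01" "distinct P02" "distinct P12" "distinct Q01" "distinct Q02" "distinct Q12"
    using pP pQ by (auto simp: is_path_def)
  have pA: "is_path ?X A1" "is_path ?X A2" "is_path ?X A3"
    unfolding A1_def A2_def A3_def using pP pQ va vb
    by (auto intro!: is_path_mapG is_path_mapH simp: is_path_rev)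
  have pC: "is_path ?X C1" "is_path ?X C2" "is_path ?X C3"
    unfolding C1_def C2_def C3_def using pP pQ va vb
    by (auto intro!: is_path_mapG is_path_mapH simp: is_path_rev)
  have lA: "last A1 = hd A2" "last A2 = hd A3" unfolding A1_def A2_def A3_def
    using neP hP hQ by (simp_all add: last_map hd_map hd_rev last_rev)
  have sA: "set A1 \<inter> set A2 \<subseteq> {hd A2}" "set A1 \<inter> set A3 = {}" "set A2 \<inter> set A3 \<subseteq> {hd A3}"
    unfolding A1_def A2_def A3_def using neP hP hQ da by (auto simp: hd_map hd_rev)
  have lC: "last C1 = hd C2" "last C2 = hd C3" unfolding C1_def C2_def C3_def
    using neP hP hQ by (simp_all add: last_map hd_map hd_rev last_rev)
  have sC: "set C1 \<inter> set C2 \<subseteq> {hd C2}" "set C1 \<inter> set C3 = {}" "set C2 \<inter> set C3 \<subseteq> {hd C3}"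
    unfolding C1_def C2_def C3_def using neP hP hQ db by (auto simp: hd_map hd_rev)
  note JA = join3[OF pA lA sA, folded R03_def]
  note JC = join3[OF pC lC sC, folded R12_def]
  have F_simps: "F 0 = (a0,b0)" "F 1 = (a0,b1)" "F 2 = (a1,b0)" "F 3 = (a1,b1)"
    unfolding F_def by simp_all
  have lt4: "{..<4::nat} = {0,1,2,3}" by auto
  have inj: "inj_on F {..<4}" unfolding lt4 using F_simps da db by (auto simp: inj_on_def)
  have Fv: "F ` {..<4} \<subseteq> verts ?X" unfolding lt4 using F_simps va vb by (auto simp: cp_verts)
  have tmF: "F k \<in> {a0,a1} \<times> {b0,b1}" if "k < 4" for k
    using that F_simps by (auto simp: less_Suc_eq numeral_eq_Suc)
  have pairs: "(i,j) \<in> {(0,1),(0,2),(0,3),(1,2),(1,3),(2,3)}" if "i < j" "j < (4::nat)" for i j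
    using that by (auto simp: less_Suc_eq numeral_eq_Suc)
  have PPs: "PP 0 1 = map (\<lambda>y. (a0, y)) Q01" "PP 0 2 = map (\<lambda>x. (x, b0)) P01" "PP 0 3 = R03"
     "PP 1 2 = R12" "PP 1 3 = map (\<lambda>x. (x, b1)) P01" "PP 2 3 = map (\<lambda>y. (a1, y)) Q01"
    unfolding PP_def by simp_all
  have c3: "is_path ?X (PP i j) \<and> hd (PP i j) = F i \<and> last (PP i j) = F j \<and>
        odd (length (PP i j) - 1) \<and> (\<forall>k<4. F k \<notin> interior (PP i j))" if "i < j" "j < 4" for i j
  proof -
    have tm: "\<And>k. k < 4 \<Longrightarrow> F k \<in> {a0,a1} \<times> {b0,b1}" using tmF by blast
    from pairs[OF that] show ?thesis
    proof (elim insertE emptyE)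
      assume ij: "(i,j) = (0,1)"
      have "\<forall>y\<in>{b0,b1}. y \<notin> interior Q01" using iQ by auto
      note S = single_H[OF pQ(1) va(1) neP(4) oQ(1) this, of "{a0,a1}"]
      have "F k \<notin> interior (PP i j)" if "k < 4" for k
        using tmF[OF that] S ij PPs by auto
      then show ?thesis using ij S F_simps PPs hQ by auto
    next
      assume ij: "(i,j) = (0,2)"
      have "\<forall>y\<in>{a0,a1}. y \<notin> interior P01" using iP by auto
      note S = single_G[OF pP(1) vb(1) neP(1) oP(1) this, of "{b0,b1}"]
      have "F k \<notin> interior (PP i j)" if "k < 4" for k
        using tmF[OF that] S ij PPs by auto
      then show ?thesis using ij S F_simps PPs hP by auto
    next
      assume ij: "(i,j) = (1,3)"
      have "\<forall>y\<in>{a0,a1}. y \<notin> interior P01" using iP by auto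
      note S = single_G[OF pP(1) vb(2) neP(1) oP(1) this, of "{b0,b1}"]
      have "F k \<notin> interior (PP i j)" if "k < 4" for k
        using tmF[OF that] S ij PPs by auto
      then show ?thesis using ij S F_simps PPs hP by auto
    next
      assume ij: "(i,j) = (2,3)"
      have "\<forall>y\<in>{b0,b1}. y \<notin> interior Q01" using iQ by auto
      note S = single_H[OF pQ(1) va(2) neP(4) oQ(1) this, of "{a0,a1}"]
      have "F k \<notin> interior (PP i j)" if "k < 4" for k
        using tmF[OF that] S ij PPs by auto
      then show ?thesis using ij S F_simps PPs hQ by auto
    next
      assume ij: "(i,j) = (0,3)"
      have "hd R03 = F 0" using JA(2) F_simps neP hQ unfolding A1_def by (simp add: hd_map)
      moreover have "last R03 = F 3" using JA(3) F_simps neP hQ unfolding A3_def by (simp add: last_map last_rev)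
      moreover have "odd (length R03 - 1)" using JA(4) oP oQ unfolding A1_def A2_def A3_def by simp
      moreover have "F k \<notin> interior R03" if "k < 4" for k
      proof -
        have "interior R03 \<subseteq> interior A1 \<union> interior A2 \<union> interior A3 \<union> {last A1, last A2}" using JA(6) .
        moreover have "last A1 = (a0, b2)" "last A2 = (a1, b2)" using neP hP hQ
          unfolding A1_def A2_def by (simp_all add: last_map)
        moreover have "F k \<notin> interior A1 \<union> interior A2 \<union> interior A3"
          using tm[OF that] iP iQ unfolding A1_def A2_def A3_def by (auto simp: interior_map interior_rev)
        moreover have "F k \<noteq> (a0,b2)" "F k \<noteq> (a1, b2)" using tm[OF that] db by auto
        ultimately have "F k \<notin> {last A1, last A2}" and "F k \<notin> interior A1 \<union> interior A2 \<union> interior A3"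
          and "interior R03 \<subseteq> interior A1 \<union> interior A2 \<union> interior A3 \<union> {last A1, last A2}" by simp_all
        then show ?thesis by blast
      qed
      ultimately show ?thesis using ij PPs JA(1) by auto
    next
      assume ij: "(i,j) = (1,2)"
      have "hd R12 = F 1" using JC(2) F_simps neP hP unfolding C1_def by (simp add: hd_map)
      moreover have "last R12 = F 2" using JC(3) F_simps neP hP unfolding C3_def by (simp add: last_map last_rev)
      moreover have "odd (length R12 - 1)" using JC(4) oP oQ unfolding C1_def C2_def C3_def by simp
      moreover have "F k \<notin> interior R12" if "k < 4" for k
      proof -
        have "interior R12 \<subseteq> interior C1 \<union> interior C2 \<union> interior C3 \<union> {last C1, last C2}" using JC(6) .
        moreover have "last C1 = (a2, b1)" "last C2 = (a2, b0)" using neP hP hQ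
          unfolding C1_def C2_def by (simp_all add: last_map last_rev)
        moreover have "F k \<notin> interior C1 \<union> interior C2 \<union> interior C3"
          using tm[OF that] iP iQ unfolding C1_def C2_def C3_def by (auto simp: interior_map interior_rev)
        moreover have "F k \<noteq> (a2,b1)" "F k \<noteq> (a2, b0)" using tm[OF that] da by auto
        ultimately have "F k \<notin> {last C1, last C2}" and "F k \<notin> interior C1 \<union> interior C2 \<union> interior C3"
          and "interior R12 \<subseteq> interior C1 \<union> interior C2 \<union> interior C3 \<union> {last C1, last C2}" by simp_all
        then show ?thesis by blast
      qed
      ultimately show ?thesis using ij PPs JC(1) by auto
    qed
  qed
  define EE where "EE i j = path_edges (PP i j)" for i j
  have EEs: "EE 0 1 = HE a0 Q01" "EE 0 2 = GE b0 P01" "EE 0 3 = HE a0 Q02 \<union> GE b2 P01 \<union> HE a1 Q12"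
     "EE 1 2 = GE b1 P02 \<union> HE a2 Q01 \<union> GE b0 P12" "EE 1 3 = GE b1 P01" "EE 2 3 = HE a1 Q01"
    unfolding EE_def PPs using JA(5) JC(5)
    by (simp_all add: path_edges_mG path_edges_mH A1_def A2_def A3_def C1_def C2_def C3_def path_edges_rev)
  note gh = GE_HE_disj[OF dsP(1) dsP(4)] GE_HE_disj[OF dsP(1) dsP(5)] GE_HE_disj[OF dsP(1) dsP(6)]
     GE_HE_disj[OF dsP(2) dsP(4)] GE_HE_disj[OF dsP(2) dsP(5)] GE_HE_disj[OF dsP(2) dsP(6)]
     GE_HE_disj[OF dsP(3) dsP(4)] GE_HE_disj[OF dsP(3) dsP(5)] GE_HE_disj[OF dsP(3) dsP(6)]
     HE_GE_disj[OF dsP(1) dsP(4)] HE_GE_disj[OF dsP(1) dsP(5)] HE_GE_disj[OF dsP(1) dsP(6)]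
     HE_GE_disj[OF dsP(2) dsP(4)] HE_GE_disj[OF dsP(2) dsP(5)] HE_GE_disj[OF dsP(2) dsP(6)]
     HE_GE_disj[OF dsP(3) dsP(4)] HE_GE_disj[OF dsP(3) dsP(5)] HE_GE_disj[OF dsP(3) dsP(6)]
  have dP': "path_edges P02 \<inter> path_edges P01 = {}" "path_edges P12 \<inter> path_edges P01 = {}"
       "path_edges P12 \<inter> path_edges P02 = {}" using dP by blast+
  have dQ': "path_edges Q02 \<inter> path_edges Q01 = {}" "path_edges Q12 \<inter> path_edges Q01 = {}"
       "path_edges Q12 \<inter> path_edges Q02 = {}" using dQ by blast+
  note sm = GE_same_disj[OF dP(1)] GE_same_disj[OF dP(2)] GE_same_disj[OF dP(3)]
    GE_same_disj[OF dP'(1)] GE_same_disj[OF dP'(2)] GE_same_disj[OF dP'(3)]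
    HE_same_disj[OF dQ(1)] HE_same_disj[OF dQ(2)] HE_same_disj[OF dQ(3)]
    HE_same_disj[OF dQ'(1)] HE_same_disj[OF dQ'(2)] HE_same_disj[OF dQ'(3)]
  have db': "b1 \<noteq> b0" "b2 \<noteq> b0" "b2 \<noteq> b1" using db by auto
  have da': "a1 \<noteq> a0" "a2 \<noteq> a0" "a2 \<noteq> a1" using da by auto
  note lv = GE_lvl_disj[OF _ dsP(1)] GE_lvl_disj[OF _ dsP(2)] GE_lvl_disj[OF _ dsP(3)]
     HE_lvl_disj[OF _ dsP(4)] HE_lvl_disj[OF _ dsP(5)] HE_lvl_disj[OF _ dsP(6)]
  have X1: "EE 0 1 \<inter> EE 0 2 = {}" by (simp add: EEs[simplified] Int_Un_distrib Int_Un_distrib2 gh sm lv da db da' db')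
  have Y1: "EE 0 2 \<inter> EE 0 1 = {}" using X1 by (simp add: Int_commute)
  have X2: "EE 0 1 \<inter> EE 0 3 = {}" by (simp add: EEs[simplified] Int_Un_distrib Int_Un_distrib2 gh sm lv da db da' db')
  have Y2: "EE 0 3 \<inter> EE 0 1 = {}" using X2 by (simp add: Int_commute)
  have X3: "EE 0 1 \<inter> EE 1 2 = {}" by (simp add: EEs[simplified] Int_Un_distrib Int_Un_distrib2 gh sm lv da db da' db')
  have Y3: "EE 1 2 \<inter> EE 0 1 = {}" using X3 by (simp add: Int_commute)
  have X4: "EE 0 1 \<inter> EE 1 3 = {}" by (simp add: EEs[simplified] Int_Un_distrib Int_Un_distrib2 gh sm lv da db da' db')
  have Y4: "EE 1 3 \<inter> EE 0 1 = {}" using X4 by (simp add: Int_commute)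
  have X5: "EE 0 1 \<inter> EE 2 3 = {}" by (simp add: EEs[simplified] Int_Un_distrib Int_Un_distrib2 gh sm lv da db da' db')
  have Y5: "EE 2 3 \<inter> EE 0 1 = {}" using X5 by (simp add: Int_commute)
  have X6: "EE 0 2 \<inter> EE 0 3 = {}" by (simp add: EEs[simplified] Int_Un_distrib Int_Un_distrib2 gh sm lv da db da' db')
  have Y6: "EE 0 3 \<inter> EE 0 2 = {}" using X6 by (simp add: Int_commute)
  have X7: "EE 0 2 \<inter> EE 1 2 = {}" by (simp add: EEs[simplified] Int_Un_distrib Int_Un_distrib2 gh sm lv da db da' db')
  have Y7: "EE 1 2 \<inter> EE 0 2 = {}" using X7 by (simp add: Int_commute)
  have X8: "EE 0 2 \<inter> EE 1 3 = {}" by (simp add: EEs[simplified] Int_Un_distrib Int_Un_distrib2 gh sm lv da db da' db')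
  have Y8: "EE 1 3 \<inter> EE 0 2 = {}" using X8 by (simp add: Int_commute)
  have X9: "EE 0 2 \<inter> EE 2 3 = {}" by (simp add: EEs[simplified] Int_Un_distrib Int_Un_distrib2 gh sm lv da db da' db')
  have Y9: "EE 2 3 \<inter> EE 0 2 = {}" using X9 by (simp add: Int_commute)
  have X10: "EE 0 3 \<inter> EE 1 2 = {}" by (simp add: EEs[simplified] Int_Un_distrib Int_Un_distrib2 gh sm lv da db da' db')
  have Y10: "EE 1 2 \<inter> EE 0 3 = {}" using X10 by (simp add: Int_commute)
  have X11: "EE 0 3 \<inter> EE 1 3 = {}" by (simp add: EEs[simplified] Int_Un_distrib Int_Un_distrib2 gh sm lv da db da' db')
  have Y11: "EE 1 3 \<inter> EE 0 3 = {}" using X11 by (simp add: Int_commute)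
  have X12: "EE 0 3 \<inter> EE 2 3 = {}" by (simp add: EEs[simplified] Int_Un_distrib Int_Un_distrib2 gh sm lv da db da' db')
  have Y12: "EE 2 3 \<inter> EE 0 3 = {}" using X12 by (simp add: Int_commute)
  have X13: "EE 1 2 \<inter> EE 1 3 = {}" by (simp add: EEs[simplified] Int_Un_distrib Int_Un_distrib2 gh sm lv da db da' db')
  have Y13: "EE 1 3 \<inter> EE 1 2 = {}" using X13 by (simp add: Int_commute)
  have X14: "EE 1 2 \<inter> EE 2 3 = {}" by (simp add: EEs[simplified] Int_Un_distrib Int_Un_distrib2 gh sm lv da db da' db')
  have Y14: "EE 2 3 \<inter> EE 1 2 = {}" using X14 by (simp add: Int_commute)
  have X15: "EE 1 3 \<inter> EE 2 3 = {}" by (simp add: EEs[simplified] Int_Un_distrib Int_Un_distrib2 gh sm lv da db da' db')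
  have Y15: "EE 2 3 \<inter> EE 1 3 = {}" using X15 by (simp add: Int_commute)
  have c4: "EE i j \<inter> EE k l = {}" if "i < j" "j < 4" "k < l" "l < 4" "(i,j) \<noteq> (k,l)" for i j k l
    using pairs[OF that(1,2)] pairs[OF that(3,4)] that(5)
    by (elim insertE emptyE; simp add: X1[simplified] Y1[simplified] X2[simplified] Y2[simplified] X3[simplified] Y3[simplified] X4[simplified] Y4[simplified] X5[simplified] Y5[simplified] X6[simplified] Y6[simplified] X7[simplified] Y7[simplified] X8[simplified] Y8[simplified] X9[simplified] Y9[simplified] X10[simplified] Y10[simplified] X11[simplified] Y11[simplified] X12[simplified] Y12[simplified] X13[simplified] Y13[simplified] X14[simplified] Y14[simplified] X15[simplified] Y15[simplified])
  have "toi_immersion ?X 4 F PP"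
    unfolding toi_immersion_def
    apply (intro conjI)
    subgoal by (rule inj)
    subgoal by (rule Fv)
    subgoal using c3 by blast
    subgoal using c4 unfolding EE_def by blast
    done
  then show ?thesis unfolding has_toi_def by blast
qed

lemma has_toi_0: "has_toi G 0"
  unfolding has_toi_def toi_immersion_def by auto

lemma has_toi_bound: "finite (verts G) \<Longrightarrow> has_toi G t \<Longrightarrow> t \<le> card (verts G)"
  unfolding has_toi_def toi_immersion_def
  by (metis card_image card_lessThan card_mono)

lemma toi_finite: "finite (verts G) \<Longrightarrow> finite {t. has_toi G t}"
  using has_toi_bound by (metis (mono_tags) finite_nat_set_iff_bounded_le mem_Collect_eq)

lemma toi_has: "finite (verts G) \<Longrightarrow> has_toi G (toi G)"
  unfolding toi_def using toi_finite has_toi_0 by (metis Max_in empty_iff mem_Collect_eq)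

lemma toi_ge: "finite (verts G) \<Longrightarrow> has_toi G t \<Longrightarrow> t \<le> toi G"
  unfolding toi_def using toi_finite by (metis Max_ge mem_Collect_eq)

lemma imm3_facts:
  assumes "toi_immersion G 3 f P"
  shows "f 0 \<noteq> f 1" "f 0 \<noteq> f 2" "f 1 \<noteq> f 2"
    "f 0 \<in> verts G" "f 1 \<in> verts G" "f 2 \<in> verts G"
    "is_path G (P 0 1)" "is_path G (P 0 2)" "is_path G (P 1 2)"
    "hd (P 0 1) = f 0" "last (P 0 1) = f 1" "hd (P 0 2) = f 0" "last (P 0 2) = f 2"
    "hd (P 1 2) = f 1" "last (P 1 2) = f 2"
    "odd (length (P 0 1) - 1)" "odd (length (P 0 2) - 1)" "odd (length (P 1 2) - 1)"
    "\<forall>x\<in>{f 0, f 1, f 2}. x \<notin> interior (P 0 1) \<and> x \<notin> interior (P 0 2) \<and> x \<notin> interior (P 1 2)"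
    "path_edges (P 0 1) \<inter> path_edges (P 0 2) = {}" "path_edges (P 0 1) \<inter> path_edges (P 1 2) = {}"
    "path_edges (P 0 2) \<inter> path_edges (P 1 2) = {}"
proof -
  note d = assms[unfolded toi_immersion_def]
  have inj: "inj_on f {..<3}" using d by blast
  have i: "\<And>x y. x < 3 \<Longrightarrow> y < 3 \<Longrightarrow> f x = f y \<Longrightarrow> x = y" using inj by (auto simp: inj_on_def)
  show "f 0 \<noteq> f 1" "f 0 \<noteq> f 2" "f 1 \<noteq> f 2" using i[of 0 1] i[of 0 2] i[of 1 2] by auto
  show "f 0 \<in> verts G" "f 1 \<in> verts G" "f 2 \<in> verts G" using d by auto
  have c: "is_path G (P i j) \<and> hd (P i j) = f i \<and> last (P i j) = f j \<and>
        odd (length (P i j) - 1) \<and> (\<forall>k<3. f k \<notin> interior (P i j))" if "i < j" "j < 3" for i j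
    using d that by blast
  note c01 = c[of 0 1, simplified] and c02 = c[of 0 2, simplified] and c12 = c[of 1 2, simplified]
  show "is_path G (P 0 1)" "is_path G (P 0 2)" "is_path G (P 1 2)"
    "hd (P 0 1) = f 0" "last (P 0 1) = f 1" "hd (P 0 2) = f 0" "last (P 0 2) = f 2"
    "hd (P 1 2) = f 1" "last (P 1 2) = f 2"
    "odd (length (P 0 1) - 1)" "odd (length (P 0 2) - 1)" "odd (length (P 1 2) - 1)"
    using c01 c02 c12 by auto
  show "\<forall>x\<in>{f 0, f 1, f 2}. x \<notin> interior (P 0 1) \<and> x \<notin> interior (P 0 2) \<and> x \<notin> interior (P 1 2)"
    using c01 c02 c12 by (auto dest: spec[of _ 0] spec[of _ 1] spec[of _ 2])
  have e: "path_edges (P i j) \<inter> path_edges (P k l) = {}"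
    if "i < j" "j < 3" "k < l" "l < 3" "(i,j) \<noteq> (k,l)" for i j k l
    using d that by blast
  show "path_edges (P 0 1) \<inter> path_edges (P 0 2) = {}" "path_edges (P 0 1) \<inter> path_edges (P 1 2) = {}"
    "path_edges (P 0 2) \<inter> path_edges (P 1 2) = {}"
    using e[of 0 1 0 2] e[of 0 1 1 2] e[of 0 2 1 2] by simp_all
qed

lemma part1:
  fixes G :: "'a graph" and H :: "'b graph"
  assumes "simple_graph G" "simple_graph H" "toi G = 3" "toi H = 3"
  shows "4 \<le> toi (cart_prod G H)"
proof -
  have fG: "finite (verts G)" and fH: "finite (verts H)" using assms(1,2) by (auto simp: simple_graph_def)
  obtain f P where imG: "toi_immersion G 3 f P" using toi_has[OF fG] assms(3) unfolding has_toi_def by auto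
  obtain g Q where imH: "toi_immersion H 3 g Q" using toi_has[OF fH] assms(4) unfolding has_toi_def by auto
  have "has_toi (cart_prod G H) 4"
    apply (rule K4_construction[where ?a0.0="f 0" and ?a1.0="f 1" and ?a2.0="f 2" and ?b0.0="g 0" and ?b1.0="g 1" and ?b2.0="g 2"
       and ?P01.0="P 0 1" and ?P02.0="P 0 2" and ?P12.0="P 1 2" and ?Q01.0="Q 0 1" and ?Q02.0="Q 0 2" and ?Q12.0="Q 1 2"])
    using imm3_facts[OF imG] imm3_facts[OF imH] by simp_all
  moreover have "finite (verts (cart_prod G H))" using fG fH by (simp add: cp_verts)
  ultimately show ?thesis using toi_ge by blast
qed

lemma cross_bool:
  fixes b00 b01 b02 b10 b11 b12 b20 b21 b22 :: bool
  assumes "of_bool b00 + of_bool b01 + of_bool b02 + of_bool b10 + of_bool b11 + of_bool b12 + of_bool b20 + of_bool b21 + of_bool b22 = (5::nat)"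
    and "\<not> b00 \<longrightarrow> of_bool b01 + of_bool b02 + of_bool b10 + of_bool b20 \<le> (2::nat)"
    and "\<not> b01 \<longrightarrow> of_bool b00 + of_bool b02 + of_bool b11 + of_bool b21 \<le> (2::nat)"
    and "\<not> b02 \<longrightarrow> of_bool b00 + of_bool b01 + of_bool b12 + of_bool b22 \<le> (2::nat)"
    and "\<not> b10 \<longrightarrow> of_bool b00 + of_bool b11 + of_bool b12 + of_bool b20 \<le> (2::nat)"
    and "\<not> b11 \<longrightarrow> of_bool b01 + of_bool b10 + of_bool b12 + of_bool b21 \<le> (2::nat)"
    and "\<not> b12 \<longrightarrow> of_bool b02 + of_bool b10 + of_bool b11 + of_bool b22 \<le> (2::nat)"
    and "\<not> b20 \<longrightarrow> of_bool b00 + of_bool b10 + of_bool b21 + of_bool b22 \<le> (2::nat)"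
    and "\<not> b21 \<longrightarrow> of_bool b01 + of_bool b11 + of_bool b20 + of_bool b22 \<le> (2::nat)"
    and "\<not> b22 \<longrightarrow> of_bool b02 + of_bool b12 + of_bool b20 + of_bool b21 \<le> (2::nat)"
  shows "(b00 \<and> b01 \<and> b02 \<and> b10 \<and> \<not> b11 \<and> \<not> b12 \<and> b20 \<and> \<not> b21 \<and> \<not> b22)
    \<or> (b00 \<and> b01 \<and> b02 \<and> \<not> b10 \<and> b11 \<and> \<not> b12 \<and> \<not> b20 \<and> b21 \<and> \<not> b22)
    \<or> (b00 \<and> b01 \<and> b02 \<and> \<not> b10 \<and> \<not> b11 \<and> b12 \<and> \<not> b20 \<and> \<not> b21 \<and> b22)
    \<or> (b00 \<and> \<not> b01 \<and> \<not> b02 \<and> b10 \<and> b11 \<and> b12 \<and> b20 \<and> \<not> b21 \<and> \<not> b22)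
    \<or> (\<not> b00 \<and> b01 \<and> \<not> b02 \<and> b10 \<and> b11 \<and> b12 \<and> \<not> b20 \<and> b21 \<and> \<not> b22)
    \<or> (\<not> b00 \<and> \<not> b01 \<and> b02 \<and> b10 \<and> b11 \<and> b12 \<and> \<not> b20 \<and> \<not> b21 \<and> b22)
    \<or> (b00 \<and> \<not> b01 \<and> \<not> b02 \<and> b10 \<and> \<not> b11 \<and> \<not> b12 \<and> b20 \<and> b21 \<and> b22)
    \<or> (\<not> b00 \<and> b01 \<and> \<not> b02 \<and> \<not> b10 \<and> b11 \<and> \<not> b12 \<and> b20 \<and> b21 \<and> b22)
    \<or> (\<not> b00 \<and> \<not> b01 \<and> b02 \<and> \<not> b10 \<and> \<not> b11 \<and> b12 \<and> b20 \<and> b21 \<and> b22)"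
  using assms by (cases b00; cases b01; cases b02; cases b10; cases b11; cases b12; cases b20; cases b21; cases b22; simp)

definition VV :: "(nat \<times> nat) set" where "VV = {0,1,2} \<times> {0,1,2}"
definition adjr :: "nat \<times> nat \<Rightarrow> nat \<times> nat \<Rightarrow> bool" where
  "adjr u v = ((fst u = fst v \<and> snd u \<noteq> snd v) \<or> (snd u = snd v \<and> fst u \<noteq> fst v))"
abbreviation XX :: "(nat \<times> nat) graph" where "XX \<equiv> cart_prod K3 K3"

lemma vertsXX: "verts XX = VV"
  unfolding VV_def cart_prod_def K3_def verts_def by simp

lemma K3_edge: "{h1, h2} \<in> edges K3 \<longleftrightarrow> h1 \<in> {0,1,2} \<and> h2 \<in> {0,1,2} \<and> h1 \<noteq> h2"
  unfolding K3_def edges_def by (auto simp: doubleton_eq_iff)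

lemma vK3: "verts K3 = {0,1,2}" unfolding K3_def verts_def by simp

lemma mem012: "x \<in> {0,1,2::nat} \<longleftrightarrow> x < 3" by auto
lemma mem_VV: "(a, b) \<in> VV \<longleftrightarrow> a < 3 \<and> b < 3" unfolding VV_def by auto

lemma edgesXX_split: "e \<in> edges XX \<Longrightarrow>
   (\<exists>g h1 h2. e = {(g, h1), (g, h2)} \<and> g \<in> verts K3 \<and> {h1, h2} \<in> edges K3) \<or>
   (\<exists>g1 g2 h. e = {(g1, h), (g2, h)} \<and> h \<in> verts K3 \<and> {g1, g2} \<in> edges K3)"
  unfolding cart_prod_def edges_def snd_conv by blast

lemma edgeXX_D:
  assumes "{u, v} \<in> edges XX" shows "u \<in> VV \<and> v \<in> VV \<and> adjr u v"
  using edgesXX_split[OF assms]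
proof (elim disjE exE conjE)
  fix g h1 h2 assume e: "{u,v} = {(g, h1), (g, h2)}" "g \<in> verts K3" "{h1, h2} \<in> edges K3"
  then have e2: "g < 3" "h1 < 3" "h2 < 3" "h1 \<noteq> h2" unfolding vK3 K3_edge mem012 by simp_all
  from e(1) have "(u = (g,h1) \<and> v = (g,h2)) \<or> (u = (g,h2) \<and> v = (g,h1))" by (simp add: doubleton_eq_iff)
  then show ?thesis
  proof (elim disjE conjE)
    assume "u = (g,h1)" "v = (g,h2)" then show ?thesis using e2 by (simp add: mem_VV adjr_def)
  next
    assume "u = (g,h2)" "v = (g,h1)" then show ?thesis using e2 by (simp add: mem_VV adjr_def)
  qed
next
  fix g1 g2 h assume e: "{u,v} = {(g1, h), (g2, h)}" "h \<in> verts K3" "{g1, g2} \<in> edges K3"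
  then have e2: "h < 3" "g1 < 3" "g2 < 3" "g1 \<noteq> g2" unfolding vK3 K3_edge mem012 by simp_all
  from e(1) have "(u = (g1,h) \<and> v = (g2,h)) \<or> (u = (g2,h) \<and> v = (g1,h))" by (simp add: doubleton_eq_iff)
  then show ?thesis
  proof (elim disjE conjE)
    assume "u = (g1,h)" "v = (g2,h)" then show ?thesis using e2 by (simp add: mem_VV adjr_def)
  next
    assume "u = (g2,h)" "v = (g1,h)" then show ?thesis using e2 by (simp add: mem_VV adjr_def)
  qed
qed

lemma edgeXX: "{u, v} \<in> edges XX \<longleftrightarrow> u \<in> VV \<and> v \<in> VV \<and> adjr u v"
proof
  assume "{u, v} \<in> edges XX" then show "u \<in> VV \<and> v \<in> VV \<and> adjr u v" by (rule edgeXX_D)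
next
  assume a: "u \<in> VV \<and> v \<in> VV \<and> adjr u v"
  obtain a1 a2 c1 c2 where uv: "u = (a1,a2)" "v = (c1,c2)" by (cases u, cases v) auto
  have m: "a1 < 3" "a2 < 3" "c1 < 3" "c2 < 3"
    and ad: "(a1 = c1 \<and> a2 \<noteq> c2) \<or> (a2 = c2 \<and> a1 \<noteq> c1)"
    using a uv by (simp_all add: mem_VV adjr_def)
  show "{u, v} \<in> edges XX"
  proof (cases "a1 = c1")
    case True
    then have "{a2, c2} \<in> edges K3" using m ad unfolding K3_edge mem012 by simp
    moreover have "a1 \<in> verts K3" using m unfolding vK3 mem012 by simp
    ultimately show ?thesis using cp_edgeH[of a2 c2 K3 a1 K3] uv True by simp
  next
    case False
    then have "{a1, c1} \<in> edges K3" "a2 = c2" using m ad unfolding K3_edge mem012 by simp_all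
    moreover have "a2 \<in> verts K3" using m unfolding vK3 mem012 by simp
    ultimately show ?thesis using cp_edgeG[of a1 c1 K3 a2 K3] uv by simp
  qed
qed

definition Nb :: "nat \<times> nat \<Rightarrow> (nat \<times> nat) set" where "Nb x = {y. {x, y} \<in> edges XX}"

lemma VV9: "VV = {(0,0),(0,1),(0,2),(1,0),(1,1),(1,2),(2,0),(2,1),(2,2)}" unfolding VV_def by auto

lemma filter_insert: "{y \<in> insert a A. P y} = (if P a then insert a {y \<in> A. P y} else {y \<in> A. P y})"
  by auto

lemma Nb_VV: "x \<in> VV \<Longrightarrow> Nb x = {y \<in> VV. adjr x y}"
  unfolding Nb_def edgeXX by auto

lemma finite_VV: "finite VV" unfolding VV_def by simp

lemma Nb_card: "x \<in> VV \<Longrightarrow> card (Nb x) = 4"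
proof -
  assume x: "x \<in> VV"
  then show ?thesis unfolding Nb_VV[OF x] using x unfolding VV9
    by (elim insertE emptyE; simp only: filter_insert; simp add: adjr_def)
qed

lemma Nb_finite: "finite (Nb x)"
  unfolding Nb_def edgeXX using finite_VV by (auto intro: finite_subset)

definition Qp :: "(nat \<Rightarrow> nat \<Rightarrow> 'a list) \<Rightarrow> nat \<Rightarrow> nat \<Rightarrow> 'a list" where
  "Qp P k m = (if k < m then P k m else rev (P m k))"

lemma len4_list: "length xs = 4 \<Longrightarrow> xs = [xs!0, xs!1, xs!2, xs!3]"
  by (cases xs; cases "tl xs"; cases "tl (tl xs)"; cases "tl (tl (tl xs))") auto

lemma even_ge4: "n \<noteq> 2 \<Longrightarrow> 2 \<le> n \<Longrightarrow> even (n::nat) \<Longrightarrow> 4 \<le> n"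
  by (elim evenE) auto

context
  fixes f :: "nat \<Rightarrow> nat \<times> nat" and P :: "nat \<Rightarrow> nat \<Rightarrow> (nat \<times> nat) list"
  assumes imm: "toi_immersion XX 5 f P"
begin

lemma finj: "k < 5 \<Longrightarrow> m < 5 \<Longrightarrow> f k = f m \<Longrightarrow> k = m"
  using imm unfolding toi_immersion_def inj_on_def by auto

lemma fV: "k < 5 \<Longrightarrow> f k \<in> VV"
  using imm unfolding toi_immersion_def vertsXX by auto

lemma P1: "i < j \<Longrightarrow> j < 5 \<Longrightarrow> is_path XX (P i j) \<and> hd (P i j) = f i \<and> last (P i j) = f j \<and>
        odd (length (P i j) - 1) \<and> (\<forall>l<5. f l \<notin> interior (P i j))"
  using imm unfolding toi_immersion_def by blast

lemma Q1:
  assumes "k < 5" "m < 5" "k \<noteq> m"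
  shows "is_path XX (Qp P k m) \<and> hd (Qp P k m) = f k \<and> last (Qp P k m) = f m \<and>
        odd (length (Qp P k m) - 1) \<and> (\<forall>l<5. f l \<notin> interior (Qp P k m))"
proof (cases "k < m")
  case True then show ?thesis using P1[of k m] assms by (simp add: Qp_def)
next
  case False
  then have "m < k" using assms by simp
  then have p: "is_path XX (P m k) \<and> hd (P m k) = f m \<and> last (P m k) = f k \<and>
        odd (length (P m k) - 1) \<and> (\<forall>l<5. f l \<notin> interior (P m k))" using P1[of m k] assms by simp
  then have ne: "P m k \<noteq> []" by (simp add: is_path_def)
  show ?thesis using False p ne by (simp add: Qp_def is_path_rev hd_rev last_rev interior_rev)
qed

lemma Q_edges: "k \<noteq> m \<Longrightarrow> path_edges (Qp P k m) = path_edges (P (min k m) (max k m))"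
  by (simp add: Qp_def path_edges_rev min_def max_def)

lemma Q_rev: "k \<noteq> m \<Longrightarrow> Qp P m k = rev (Qp P k m)"
  by (simp add: Qp_def)

lemma Q2:
  assumes "k < 5" "m < 5" "k' < 5" "m' < 5" "k \<noteq> m" "k' \<noteq> m'" "{k, m} \<noteq> {k', m'}"
  shows "path_edges (Qp P k m) \<inter> path_edges (Qp P k' m') = {}"
proof -
  have d: "path_edges (P i j) \<inter> path_edges (P i' j') = {}"
    if "i < j" "j < 5" "i' < j'" "j' < 5" "(i, j) \<noteq> (i', j')" for i j i' j'
    using imm that unfolding toi_immersion_def by blast
  have "(min k m, max k m) \<noteq> (min k' m', max k' m')"
    using assms(7) by (auto simp: min_def max_def split: if_splits)
  then show ?thesis using assms Q_edges d[of "min k m" "max k m" "min k' m'" "max k' m'"]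
    by (simp add: min_def max_def)
qed

lemma Q2': "k < 5 \<Longrightarrow> m < 5 \<Longrightarrow> k' < 5 \<Longrightarrow> m' < 5 \<Longrightarrow> k \<noteq> m \<Longrightarrow> k' \<noteq> m' \<Longrightarrow>
  e \<in> path_edges (Qp P k m) \<Longrightarrow> e \<in> path_edges (Qp P k' m') \<Longrightarrow> {k, m} = {k', m'}"
  using Q2 by blast

lemma Qpos:
  assumes "k < 5" "m < 5" "k \<noteq> m"
  defines "q \<equiv> Qp P k m"
  shows "2 \<le> length q" "even (length q)" "q ! 0 = f k" "q ! (length q - 1) = f m" "distinct q"
    "\<And>i l. 0 < i \<Longrightarrow> Suc i < length q \<Longrightarrow> l < 5 \<Longrightarrow> q ! i \<noteq> f l"
    "\<And>i. Suc i < length q \<Longrightarrow> {q ! i, q ! Suc i} \<in> edges XX"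
    "\<And>i. Suc i < length q \<Longrightarrow> {q ! i, q ! Suc i} \<in> path_edges q"
proof -
  note Q = Q1[OF assms(1-3), folded q_def]
  have ne: "q \<noteq> []" using Q by (simp add: is_path_def)
  have "0 < length q - 1" using Q odd_pos by blast
  then show "2 \<le> length q" by simp
  show "even (length q)" using Q ne by (cases "length q") auto
  show "q ! 0 = f k" using Q ne by (simp add: hd_conv_nth)
  show "q ! (length q - 1) = f m" using Q ne by (simp add: last_conv_nth)
  show "distinct q" using Q by (simp add: is_path_def)
  show "\<And>i l. 0 < i \<Longrightarrow> Suc i < length q \<Longrightarrow> l < 5 \<Longrightarrow> q ! i \<noteq> f l"
    using Q nth_interior by metis
  show "\<And>i. Suc i < length q \<Longrightarrow> {q ! i, q ! Suc i} \<in> edges XX"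
    using Q by (simp add: is_path_def)
  show "\<And>i. Suc i < length q \<Longrightarrow> {q ! i, q ! Suc i} \<in> path_edges q"
    unfolding path_edges_def by blast
qed

lemma sat:
  assumes k: "k < 5" and e: "{f k, w} \<in> edges XX"
  shows "\<exists>m<5. m \<noteq> k \<and> Qp P k m ! 1 = w"
proof -
  define M where "M = {..<5::nat} - {k}"
  define s where "s m = Qp P k m ! 1" for m
  have cM: "card M = 4" unfolding M_def using k by simp
  have Mi: "m \<in> M \<longleftrightarrow> m < 5 \<and> m \<noteq> k" for m unfolding M_def by auto
  have sub: "s ` M \<subseteq> Nb (f k)"
  proof
    fix y assume "y \<in> s ` M"
    then obtain m where m: "m < 5" "m \<noteq> k" "y = s m" using Mi by auto
    note QP = Qpos[OF k m(1) m(2)[symmetric]]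
    have "{Qp P k m ! 0, Qp P k m ! Suc 0} \<in> edges XX" using QP(1) QP(7)[of 0] by simp
    then show "y \<in> Nb (f k)" using QP(3) m(3) unfolding s_def Nb_def by simp
  qed
  have inj: "inj_on s M"
  proof (rule inj_onI)
    fix m m' assume mm: "m \<in> M" "m' \<in> M" "s m = s m'"
    show "m = m'"
    proof (rule ccontr)
      assume ne: "m \<noteq> m'"
      have m: "m < 5" "m \<noteq> k" "m' < 5" "m' \<noteq> k" using mm Mi by auto
      note QP = Qpos[OF k m(1) m(2)[symmetric]] and QP' = Qpos[OF k m(3) m(4)[symmetric]]
      have "{Qp P k m ! 0, Qp P k m ! Suc 0} \<in> path_edges (Qp P k m)" using QP(1) QP(8)[of 0] by simp
      moreover have "{Qp P k m' ! 0, Qp P k m' ! Suc 0} \<in> path_edges (Qp P k m')" using QP'(1) QP'(8)[of 0] by simp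
      ultimately have "{k, m} = {k, m'}" using Q2'[OF k m(1) k m(3)] m QP(3) QP'(3) mm(3)
        unfolding s_def by (metis One_nat_def)
      then show False using ne m by (auto simp: doubleton_eq_iff)
    qed
  qed
  have "card (s ` M) = 4" using inj cM by (simp add: card_image)
  moreover have "card (Nb (f k)) = 4" using Nb_card fV[OF k] by simp
  ultimately have "s ` M = Nb (f k)" using card_subset_eq[OF Nb_finite sub] by simp
  moreover have "w \<in> Nb (f k)" using e unfolding Nb_def by simp
  ultimately obtain m where "m \<in> M" "s m = w" by (metis imageE)
  then show ?thesis using Mi unfolding s_def by auto
qed


lemma L2:
  assumes k: "k < 5" and x: "\<forall>l<5. x \<noteq> f l" and e: "{f k, x} \<in> edges XX"
  shows "\<exists>m<5. m \<noteq> k \<and> Qp P k m ! 1 = x \<and> 4 \<le> length (Qp P k m) \<and>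
     (\<forall>l<5. Qp P k m ! 2 \<noteq> f l) \<and> {x, Qp P k m ! 2} \<in> edges XX"
proof -
  obtain m where m: "m < 5" "m \<noteq> k" "Qp P k m ! 1 = x" using sat[OF k e] by blast
  note QP = Qpos[OF k m(1) m(2)[symmetric]]
  let ?q = "Qp P k m"
  have "length ?q \<noteq> 2"
  proof
    assume "length ?q = 2"
    then have "?q ! 1 = f m" using QP(4) by simp
    then have "f m = x" using m(3) by simp
    then show False using x m(1) by auto
  qed
  then have l4: "4 \<le> length ?q" using QP(1,2) even_ge4 by blast
  have "\<forall>l<5. ?q ! 2 \<noteq> f l" using QP(6)[of 2] l4 by simp
  moreover have "{?q ! 1, ?q ! 2} \<in> edges XX" using QP(7)[of 1] l4 by (simp add: numeral_2_eq_2)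
  ultimately show ?thesis using m l4 by auto
qed

lemma L3a:
  assumes k1: "k1 < 5" and k2: "k2 < 5" and kk: "k1 \<noteq> k2"
    and m1: "m1 < 5" "m1 \<noteq> k1" "Qp P k1 m1 ! 1 = x" "4 \<le> length (Qp P k1 m1)"
    and m2: "m2 < 5" "m2 \<noteq> k2" "Qp P k2 m2 ! 1 = x" "4 \<le> length (Qp P k2 m2)"
  shows "Qp P k1 m1 ! 2 \<noteq> Qp P k2 m2 ! 2"
proof
  assume eq: "Qp P k1 m1 ! 2 = Qp P k2 m2 ! 2"
  define q1 where "q1 = Qp P k1 m1"
  define q2 where "q2 = Qp P k2 m2"
  note Q1' = Qpos[OF k1 m1(1) m1(2)[symmetric], folded q1_def]
  note Q2'' = Qpos[OF k2 m2(1) m2(2)[symmetric], folded q2_def]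
  have l1: "Suc 1 < length q1" "Suc 1 < length q2" using m1(4) m2(4) unfolding q1_def q2_def by simp_all
  have "{q1 ! 1, q1 ! Suc 1} \<in> path_edges q1" by (rule Q1'(8)[OF l1(1)])
  then have e1: "{x, q1 ! 2} \<in> path_edges q1" using m1(3) unfolding q1_def by (simp add: numeral_2_eq_2)
  have "{q2 ! 1, q2 ! Suc 1} \<in> path_edges q2" by (rule Q2''(8)[OF l1(2)])
  then have e2: "{x, q1 ! 2} \<in> path_edges q2" using m2(3) eq unfolding q1_def q2_def by (simp add: numeral_2_eq_2)
  have "{k1, m1} = {k2, m2}"
    using Q2'[OF k1 m1(1) k2 m2(1) m1(2)[symmetric] m2(2)[symmetric] e1[unfolded q1_def] e2[unfolded q1_def q2_def]] .
  then have km: "k2 = m1" "m2 = k1" using kk by (auto simp: doubleton_eq_iff)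
  then have qq: "q2 = rev q1" unfolding q1_def q2_def using Q_rev[of k1 m1] m1(2) by simp
  have "rev q1 ! 1 = x" using m2(3) qq unfolding q2_def by simp
  then have "q1 ! (length q1 - Suc 1) = x" using rev_nth[of 1 q1] l1 by simp
  then have "q1 ! (length q1 - 2) = q1 ! 1" using m1(3) unfolding q1_def by (simp add: numeral_2_eq_2)
  moreover have "length q1 - 2 < length q1" "1 < length q1" using l1 by simp_all
  ultimately have "length q1 - 2 = 1" using nth_eq_iff_index_eq[OF Q1'(5)] by blast
  then show False using m1(4) unfolding q1_def by simp
qed

lemma L3:
  assumes xV: "x \<in> VV" and x: "\<forall>l<5. x \<noteq> f l"
    and a: "a \<in> f ` {..<5}" "b \<in> f ` {..<5}" "c \<in> f ` {..<5}" "a \<noteq> b" "a \<noteq> c" "b \<noteq> c"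
    and ad: "a \<in> Nb x" "b \<in> Nb x" "c \<in> Nb x"
  shows False
proof -
  obtain ka kb kc where k: "ka < 5" "kb < 5" "kc < 5" "a = f ka" "b = f kb" "c = f kc" using a by auto
  have e: "{f ka, x} \<in> edges XX" "{f kb, x} \<in> edges XX" "{f kc, x} \<in> edges XX"
    using ad k unfolding Nb_def by (simp_all add: insert_commute)
  obtain ma where ma: "ma < 5" "ma \<noteq> ka" "Qp P ka ma ! 1 = x" "4 \<le> length (Qp P ka ma)"
    "\<forall>l<5. Qp P ka ma ! 2 \<noteq> f l" "{x, Qp P ka ma ! 2} \<in> edges XX" using L2[OF k(1) x e(1)] by blast
  obtain mb where mb: "mb < 5" "mb \<noteq> kb" "Qp P kb mb ! 1 = x" "4 \<le> length (Qp P kb mb)"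
    "\<forall>l<5. Qp P kb mb ! 2 \<noteq> f l" "{x, Qp P kb mb ! 2} \<in> edges XX" using L2[OF k(2) x e(2)] by blast
  obtain mc where mc: "mc < 5" "mc \<noteq> kc" "Qp P kc mc ! 1 = x" "4 \<le> length (Qp P kc mc)"
    "\<forall>l<5. Qp P kc mc ! 2 \<noteq> f l" "{x, Qp P kc mc ! 2} \<in> edges XX" using L2[OF k(3) x e(3)] by blast
  have kd: "ka \<noteq> kb" "ka \<noteq> kc" "kb \<noteq> kc" using a(4-6) k by auto
  define ya yb yc where "ya = Qp P ka ma ! 2" and "yb = Qp P kb mb ! 2" and "yc = Qp P kc mc ! 2"
  have yd: "ya \<noteq> yb" "ya \<noteq> yc" "yb \<noteq> yc" unfolding ya_def yb_def yc_def
    using L3a[OF k(1) k(2) kd(1) ma(1-4) mb(1-4)] L3a[OF k(1) k(3) kd(2) ma(1-4) mc(1-4)]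
      L3a[OF k(2) k(3) kd(3) mb(1-4) mc(1-4)] by auto
  have yT: "ya \<noteq> a" "ya \<noteq> b" "ya \<noteq> c" "yb \<noteq> a" "yb \<noteq> b" "yb \<noteq> c" "yc \<noteq> a" "yc \<noteq> b" "yc \<noteq> c"
    using ma(5) mb(5) mc(5) k unfolding ya_def yb_def yc_def by auto
  have yN: "ya \<in> Nb x" "yb \<in> Nb x" "yc \<in> Nb x" using ma(6) mb(6) mc(6) unfolding Nb_def ya_def yb_def yc_def by auto
  have "{a, b, c, ya, yb, yc} \<subseteq> Nb x" using ad yN by auto
  then have "card {a, b, c, ya, yb, yc} \<le> card (Nb x)" using Nb_finite by (rule card_mono[rotated])
  moreover have "card {a, b, c, ya, yb, yc} = 6" using a(4-6) yd yT by simp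
  ultimately show False using Nb_card[OF xV] by simp
qed

end

lemma all3: "(\<forall>r<(3::nat). P r) \<longleftrightarrow> P 0 \<and> P 1 \<and> P 2"
  by (auto simp: less_Suc_eq numeral_eq_Suc)
lemma ex3: "(\<exists>r<(3::nat). P r) \<longleftrightarrow> P 0 \<or> P 1 \<or> P 2"
  by (auto simp: less_Suc_eq numeral_eq_Suc)

lemma cross_boolf:
  fixes B :: "nat \<Rightarrow> nat \<Rightarrow> bool"
  assumes "of_bool (B 0 0) + of_bool (B 0 1) + of_bool (B 0 2) + of_bool (B 1 0) + of_bool (B 1 1) + of_bool (B 1 2) + of_bool (B 2 0) + of_bool (B 2 1) + of_bool (B 2 2) = (5::nat)"
    and "\<not> B 0 0 \<longrightarrow> of_bool (B 0 1) + of_bool (B 0 2) + of_bool (B 1 0) + of_bool (B 2 0) \<le> (2::nat)"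
    and "\<not> B 0 1 \<longrightarrow> of_bool (B 0 0) + of_bool (B 0 2) + of_bool (B 1 1) + of_bool (B 2 1) \<le> (2::nat)"
    and "\<not> B 0 2 \<longrightarrow> of_bool (B 0 0) + of_bool (B 0 1) + of_bool (B 1 2) + of_bool (B 2 2) \<le> (2::nat)"
    and "\<not> B 1 0 \<longrightarrow> of_bool (B 0 0) + of_bool (B 1 1) + of_bool (B 1 2) + of_bool (B 2 0) \<le> (2::nat)"
    and "\<not> B 1 1 \<longrightarrow> of_bool (B 0 1) + of_bool (B 1 0) + of_bool (B 1 2) + of_bool (B 2 1) \<le> (2::nat)"
    and "\<not> B 1 2 \<longrightarrow> of_bool (B 0 2) + of_bool (B 1 0) + of_bool (B 1 1) + of_bool (B 2 2) \<le> (2::nat)"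
    and "\<not> B 2 0 \<longrightarrow> of_bool (B 0 0) + of_bool (B 1 0) + of_bool (B 2 1) + of_bool (B 2 2) \<le> (2::nat)"
    and "\<not> B 2 1 \<longrightarrow> of_bool (B 0 1) + of_bool (B 1 1) + of_bool (B 2 0) + of_bool (B 2 2) \<le> (2::nat)"
    and "\<not> B 2 2 \<longrightarrow> of_bool (B 0 2) + of_bool (B 1 2) + of_bool (B 2 0) + of_bool (B 2 1) \<le> (2::nat)"
  shows "\<exists>r0<3. \<exists>c0<3. \<forall>r<3. \<forall>c<3. (B r c \<longleftrightarrow> r = r0 \<or> c = c0)"
  using cross_bool[of "B 0 0" "B 0 1" "B 0 2" "B 1 0" "B 1 1" "B 1 2" "B 2 0" "B 2 1" "B 2 2", OF assms] by (elim disjE) (simp_all add: ex3 all3)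

lemma VV_in: "(a, b) \<in> VV" if "a < 3" "b < 3" using that by (simp add: mem_VV)

lemma Nb_explicit: "x \<in> VV \<Longrightarrow> (\<And>y. y \<in> S \<longleftrightarrow> y \<in> VV \<and> adjr x y) \<Longrightarrow> Nb x = S"
  unfolding Nb_def edgeXX by auto

lemma Nb_00: "Nb (0, 0) = {(0, 1), (0, 2), (1, 0), (2, 0)}"
  by (subst Nb_VV, simp add: mem_VV, simp only: VV9 filter_insert, simp add: adjr_def)
lemma Nb_01: "Nb (0, 1) = {(0, 0), (0, 2), (1, 1), (2, 1)}"
  by (subst Nb_VV, simp add: mem_VV, simp only: VV9 filter_insert, simp add: adjr_def)
lemma Nb_02: "Nb (0, 2) = {(0, 0), (0, 1), (1, 2), (2, 2)}"
  by (subst Nb_VV, simp add: mem_VV, simp only: VV9 filter_insert, simp add: adjr_def)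
lemma Nb_10: "Nb (1, 0) = {(0, 0), (1, 1), (1, 2), (2, 0)}"
  by (subst Nb_VV, simp add: mem_VV, simp only: VV9 filter_insert, simp add: adjr_def)
lemma Nb_11: "Nb (1, 1) = {(0, 1), (1, 0), (1, 2), (2, 1)}"
  by (subst Nb_VV, simp add: mem_VV, simp only: VV9 filter_insert, simp add: adjr_def)
lemma Nb_12: "Nb (1, 2) = {(0, 2), (1, 0), (1, 1), (2, 2)}"
  by (subst Nb_VV, simp add: mem_VV, simp only: VV9 filter_insert, simp add: adjr_def)
lemma Nb_20: "Nb (2, 0) = {(0, 0), (1, 0), (2, 1), (2, 2)}"
  by (subst Nb_VV, simp add: mem_VV, simp only: VV9 filter_insert, simp add: adjr_def)
lemma Nb_21: "Nb (2, 1) = {(0, 1), (1, 1), (2, 0), (2, 2)}"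
  by (subst Nb_VV, simp add: mem_VV, simp only: VV9 filter_insert, simp add: adjr_def)
lemma Nb_22: "Nb (2, 2) = {(0, 2), (1, 2), (2, 0), (2, 1)}"
  by (subst Nb_VV, simp add: mem_VV, simp only: VV9 filter_insert, simp add: adjr_def)


lemma cross_T:
  assumes TV: "T \<subseteq> VV" and cT: "card T = 5" and nb: "\<forall>x\<in>VV. x \<notin> T \<longrightarrow> card (Nb x \<inter> T) \<le> 2"
  shows "\<exists>r0<3. \<exists>c0<3. \<forall>r<3. \<forall>c<3. ((r, c) \<in> T \<longleftrightarrow> r = r0 \<or> c = c0)"
proof -
  have "(\<Sum>v\<in>VV. of_bool (v \<in> T)) = (card T :: nat)" using TV finite_VV by (simp add: Int_absorb1 Int_absorb2)
  then have H0: "of_bool ((0, 0) \<in> T) + of_bool ((0, 1) \<in> T) + of_bool ((0, 2) \<in> T) + of_bool ((1, 0) \<in> T) + of_bool ((1, 1) \<in> T) + of_bool ((1, 2) \<in> T) + of_bool ((2, 0) \<in> T) + of_bool ((2, 1) \<in> T) + of_bool ((2, 2) \<in> T) = (5::nat)" using cT unfolding VV9 by (simp del: sum_of_bool_eq add: add.assoc)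
  have S: "\<And>x. card (Nb x \<inter> T) = (\<Sum>w\<in>Nb x. of_bool (w \<in> T))" using Nb_finite by simp
  have H00: "\<not> ((0, 0) \<in> T) \<longrightarrow> of_bool ((0, 1) \<in> T) + of_bool ((0, 2) \<in> T) + of_bool ((1, 0) \<in> T) + of_bool ((2, 0) \<in> T) \<le> (2::nat)"
    using nb[rule_format, of "(0, 0)"] S[of "(0, 0)"] unfolding Nb_00 by (simp del: sum_of_bool_eq add: mem_VV add.assoc)
  have H01: "\<not> ((0, 1) \<in> T) \<longrightarrow> of_bool ((0, 0) \<in> T) + of_bool ((0, 2) \<in> T) + of_bool ((1, 1) \<in> T) + of_bool ((2, 1) \<in> T) \<le> (2::nat)"
    using nb[rule_format, of "(0, 1)"] S[of "(0, 1)"] unfolding Nb_01 by (simp del: sum_of_bool_eq add: mem_VV add.assoc)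
  have H02: "\<not> ((0, 2) \<in> T) \<longrightarrow> of_bool ((0, 0) \<in> T) + of_bool ((0, 1) \<in> T) + of_bool ((1, 2) \<in> T) + of_bool ((2, 2) \<in> T) \<le> (2::nat)"
    using nb[rule_format, of "(0, 2)"] S[of "(0, 2)"] unfolding Nb_02 by (simp del: sum_of_bool_eq add: mem_VV add.assoc)
  have H10: "\<not> ((1, 0) \<in> T) \<longrightarrow> of_bool ((0, 0) \<in> T) + of_bool ((1, 1) \<in> T) + of_bool ((1, 2) \<in> T) + of_bool ((2, 0) \<in> T) \<le> (2::nat)"
    using nb[rule_format, of "(1, 0)"] S[of "(1, 0)"] unfolding Nb_10 by (simp del: sum_of_bool_eq add: mem_VV add.assoc)
  have H11: "\<not> ((1, 1) \<in> T) \<longrightarrow> of_bool ((0, 1) \<in> T) + of_bool ((1, 0) \<in> T) + of_bool ((1, 2) \<in> T) + of_bool ((2, 1) \<in> T) \<le> (2::nat)"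
    using nb[rule_format, of "(1, 1)"] S[of "(1, 1)"] unfolding Nb_11 by (simp del: sum_of_bool_eq add: mem_VV add.assoc)
  have H12: "\<not> ((1, 2) \<in> T) \<longrightarrow> of_bool ((0, 2) \<in> T) + of_bool ((1, 0) \<in> T) + of_bool ((1, 1) \<in> T) + of_bool ((2, 2) \<in> T) \<le> (2::nat)"
    using nb[rule_format, of "(1, 2)"] S[of "(1, 2)"] unfolding Nb_12 by (simp del: sum_of_bool_eq add: mem_VV add.assoc)
  have H20: "\<not> ((2, 0) \<in> T) \<longrightarrow> of_bool ((0, 0) \<in> T) + of_bool ((1, 0) \<in> T) + of_bool ((2, 1) \<in> T) + of_bool ((2, 2) \<in> T) \<le> (2::nat)"
    using nb[rule_format, of "(2, 0)"] S[of "(2, 0)"] unfolding Nb_20 by (simp del: sum_of_bool_eq add: mem_VV add.assoc)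
  have H21: "\<not> ((2, 1) \<in> T) \<longrightarrow> of_bool ((0, 1) \<in> T) + of_bool ((1, 1) \<in> T) + of_bool ((2, 0) \<in> T) + of_bool ((2, 2) \<in> T) \<le> (2::nat)"
    using nb[rule_format, of "(2, 1)"] S[of "(2, 1)"] unfolding Nb_21 by (simp del: sum_of_bool_eq add: mem_VV add.assoc)
  have H22: "\<not> ((2, 2) \<in> T) \<longrightarrow> of_bool ((0, 2) \<in> T) + of_bool ((1, 2) \<in> T) + of_bool ((2, 0) \<in> T) + of_bool ((2, 1) \<in> T) \<le> (2::nat)"
    using nb[rule_format, of "(2, 2)"] S[of "(2, 2)"] unfolding Nb_22 by (simp del: sum_of_bool_eq add: mem_VV add.assoc)
  show ?thesis using cross_boolf[of "\<lambda>r c. (r, c) \<in> T", OF H0 H00 H01 H02 H10 H11 H12 H20 H21 H22] by simp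
qed

context
  fixes f :: "nat \<Rightarrow> nat \<times> nat" and P :: "nat \<Rightarrow> nat \<Rightarrow> (nat \<times> nat) list"
  assumes imm: "toi_immersion XX 5 f P"
begin

lemma cross_imm: "\<exists>r0<3. \<exists>c0<3. \<forall>r<3. \<forall>c<3. ((r, c) \<in> f ` {..<5} \<longleftrightarrow> r = r0 \<or> c = c0)"
proof (rule cross_T)
  show "f ` {..<5} \<subseteq> VV" using fV[OF imm] by auto
  have "inj_on f {..<5}" using imm unfolding toi_immersion_def by blast
  then show "card (f ` {..<5}) = 5" by (simp add: card_image)
  show "\<forall>x\<in>VV. x \<notin> f ` {..<5} \<longrightarrow> card (Nb x \<inter> f ` {..<5}) \<le> 2"
  proof (intro ballI impI)
    fix x assume xV: "x \<in> VV" and xT: "x \<notin> f ` {..<5}"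
    show "card (Nb x \<inter> f ` {..<5}) \<le> 2"
    proof (rule ccontr)
      assume "\<not> card (Nb x \<inter> f ` {..<5}) \<le> 2"
      then have "3 \<le> card (Nb x \<inter> f ` {..<5})" by simp
      then obtain S where S: "S \<subseteq> Nb x \<inter> f ` {..<5}" "card S = 3" by (meson obtain_subset_with_card_n)
      then obtain a b c where abc: "S = {a, b, c}" "a \<noteq> b" "b \<noteq> c" "a \<noteq> c" by (auto simp: card_3_iff)
      have x: "\<forall>l<5. x \<noteq> f l" using xT by auto
      have m: "a \<in> f ` {..<5}" "b \<in> f ` {..<5}" "c \<in> f ` {..<5}" "a \<in> Nb x" "b \<in> Nb x" "c \<in> Nb x"
        using S abc by auto
      show False using L3[OF imm xV x m(1-3) abc(2,4,3) m(4-6)] .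
    qed
  qed
qed

end

definition Nv :: "nat \<Rightarrow> nat \<Rightarrow> nat \<times> nat \<Rightarrow> bool" where
  "Nv r0 c0 x = (fst x < 3 \<and> snd x < 3 \<and> fst x \<noteq> r0 \<and> snd x \<noteq> c0)"

lemma adjr_sym: "adjr x y = adjr y x" unfolding adjr_def by auto

lemma NT: "Nv r0 c0 x \<Longrightarrow> adjr x t \<Longrightarrow> fst t = r0 \<or> snd t = c0 \<Longrightarrow> t = (r0, snd x) \<or> t = (fst x, c0)"
  unfolding Nv_def adjr_def by (cases t, cases x) auto

lemma third: "u < 3 \<Longrightarrow> v < 3 \<Longrightarrow> w < 3 \<Longrightarrow> u \<noteq> v \<Longrightarrow> u \<noteq> w \<Longrightarrow> v \<noteq> w \<Longrightarrow> w = 3 - u - (v::nat)"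
  by presburger

lemma Nnb: assumes "Nv r0 c0 y" "Nv r0 c0 a" "adjr y a" and rc: "r0 < 3" "c0 < 3"
  shows "a = (fst y, 3 - snd y - c0) \<or> a = (3 - fst y - r0, snd y)"
proof -
  obtain y1 y2 a1 a2 where ya: "y = (y1, y2)" "a = (a1, a2)" by (cases y, cases a) auto
  have h: "y1 < 3" "y2 < 3" "y1 \<noteq> r0" "y2 \<noteq> c0" "a1 < 3" "a2 < 3" "a1 \<noteq> r0" "a2 \<noteq> c0"
    "(y1 = a1 \<and> y2 \<noteq> a2) \<or> (y2 = a2 \<and> y1 \<noteq> a1)"
    using assms ya unfolding Nv_def adjr_def by auto
  from h(9) show ?thesis
  proof (elim disjE conjE)
    assume "y1 = a1" "y2 \<noteq> a2"
    then show ?thesis using ya h rc third[of y2 c0 a2] by auto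
  next
    assume "y2 = a2" "y1 \<noteq> a1"
    then show ?thesis using ya h rc third[of y1 r0 a1] by auto
  qed
qed

lemma NN2: "r0 < 3 \<Longrightarrow> c0 < 3 \<Longrightarrow> Nv r0 c0 y \<Longrightarrow> Nv r0 c0 a \<Longrightarrow> Nv r0 c0 b \<Longrightarrow> Nv r0 c0 z \<Longrightarrow>
  adjr y a \<Longrightarrow> adjr y b \<Longrightarrow> adjr y z \<Longrightarrow> a \<noteq> b \<Longrightarrow> z = a \<or> z = b"
  using Nnb[of r0 c0 y a] Nnb[of r0 c0 y b] Nnb[of r0 c0 y z] by metis

lemma other2: "r0 < (3::nat) \<Longrightarrow> \<exists>r1 r2. r1 \<noteq> r2 \<and> (\<forall>r. (r < 3 \<and> r \<noteq> r0) \<longleftrightarrow> (r = r1 \<or> r = r2))"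
proof -
  assume "r0 < 3"
  then have "r0 = 0 \<or> r0 = 1 \<or> r0 = 2" by auto
  then show ?thesis
  proof (elim disjE)
    assume "r0 = 0" then show ?thesis by (intro exI[of _ 1] exI[of _ 2]) auto
  next
    assume "r0 = 1" then show ?thesis by (intro exI[of _ 0] exI[of _ 2]) auto
  next
    assume "r0 = 2" then show ?thesis by (intro exI[of _ 0] exI[of _ 1]) auto
  qed
qed

lemma final_generic:
  fixes Y :: "nat \<times> nat \<Rightarrow> nat \<times> nat"
  assumes "r1 \<noteq> r2" "c1 \<noteq> c2"
    and "Y (r1,c1) = (r1,c2) \<or> Y (r1,c1) = (r2,c1)"
    and "Y (r1,c2) = (r1,c1) \<or> Y (r1,c2) = (r2,c2)"
    and "Y (r2,c1) = (r2,c2) \<or> Y (r2,c1) = (r1,c1)"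
    and "Y (r2,c2) = (r2,c1) \<or> Y (r2,c2) = (r1,c2)"
    and C: "\<And>x x'. x \<in> {(r1,c1),(r1,c2),(r2,c1),(r2,c2)} \<Longrightarrow> x' \<in> {(r1,c1),(r1,c2),(r2,c1),(r2,c2)} \<Longrightarrow> x \<noteq> x' \<Longrightarrow>
       Y x \<noteq> Y x' \<and> {x, Y x} \<noteq> {x', Y x'} \<and> (snd x, fst (Y x)) \<noteq> (snd x', fst (Y x'))"
  shows False
proof -
  have c1: "Y (r1,c1) \<noteq> Y (r1,c2) \<and> {(r1,c1), Y (r1,c1)} \<noteq> {(r1,c2), Y (r1,c2)} \<and> (c1, fst (Y (r1,c1))) \<noteq> (c2, fst (Y (r1,c2)))"
    using C[of "(r1,c1)" "(r1,c2)"] assms(2) by simp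
  have c2: "Y (r1,c1) \<noteq> Y (r2,c1) \<and> {(r1,c1), Y (r1,c1)} \<noteq> {(r2,c1), Y (r2,c1)} \<and> (c1, fst (Y (r1,c1))) \<noteq> (c1, fst (Y (r2,c1)))"
    using C[of "(r1,c1)" "(r2,c1)"] assms(1) by simp
  have c3: "Y (r1,c1) \<noteq> Y (r2,c2) \<and> {(r1,c1), Y (r1,c1)} \<noteq> {(r2,c2), Y (r2,c2)} \<and> (c1, fst (Y (r1,c1))) \<noteq> (c2, fst (Y (r2,c2)))"
    using C[of "(r1,c1)" "(r2,c2)"] assms(1) by simp
  have c4: "Y (r1,c2) \<noteq> Y (r2,c1) \<and> {(r1,c2), Y (r1,c2)} \<noteq> {(r2,c1), Y (r2,c1)} \<and> (c2, fst (Y (r1,c2))) \<noteq> (c1, fst (Y (r2,c1)))"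
    using C[of "(r1,c2)" "(r2,c1)"] assms(1) by simp
  have c5: "Y (r1,c2) \<noteq> Y (r2,c2) \<and> {(r1,c2), Y (r1,c2)} \<noteq> {(r2,c2), Y (r2,c2)} \<and> (c2, fst (Y (r1,c2))) \<noteq> (c2, fst (Y (r2,c2)))"
    using C[of "(r1,c2)" "(r2,c2)"] assms(1) by simp
  have c6: "Y (r2,c1) \<noteq> Y (r2,c2) \<and> {(r2,c1), Y (r2,c1)} \<noteq> {(r2,c2), Y (r2,c2)} \<and> (c1, fst (Y (r2,c1))) \<noteq> (c2, fst (Y (r2,c2)))"
    using C[of "(r2,c1)" "(r2,c2)"] assms(2) by simp
  show False using assms(1-6) c1 c2 c3 c4 c5 c6
    by (elim disjE; simp add: doubleton_eq_iff)
qed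

lemma final_contra:
  fixes Y :: "nat \<times> nat \<Rightarrow> nat \<times> nat"
  assumes rc: "r0 < 3" "c0 < 3"
    and Y1: "\<And>x. Nv r0 c0 x \<Longrightarrow> Nv r0 c0 (Y x) \<and> adjr x (Y x)"
    and Y2: "\<And>x x'. Nv r0 c0 x \<Longrightarrow> Nv r0 c0 x' \<Longrightarrow> x \<noteq> x' \<Longrightarrow>
       Y x \<noteq> Y x' \<and> {x, Y x} \<noteq> {x', Y x'} \<and> (snd x, fst (Y x)) \<noteq> (snd x', fst (Y x'))"
  shows False
proof -
  obtain r1 r2 where r: "r1 \<noteq> r2" "\<forall>r. (r < 3 \<and> r \<noteq> r0) \<longleftrightarrow> (r = r1 \<or> r = r2)" using other2[OF rc(1)] by blast
  obtain c1 c2 where c: "c1 \<noteq> c2" "\<forall>c. (c < 3 \<and> c \<noteq> c0) \<longleftrightarrow> (c = c1 \<or> c = c2)" using other2[OF rc(2)] by blast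
  have Nv_iff: "Nv r0 c0 p \<longleftrightarrow> (fst p = r1 \<or> fst p = r2) \<and> (snd p = c1 \<or> snd p = c2)" for p
    unfolding Nv_def using r(2)[rule_format, of "fst p"] c(2)[rule_format, of "snd p"] by auto
  have opt: "Y (a, b) = (a, b') \<or> Y (a, b) = (a', b)"
    if "a = r1 \<and> a' = r2 \<or> a = r2 \<and> a' = r1" "b = c1 \<and> b' = c2 \<or> b = c2 \<and> b' = c1" for a a' b b'
  proof -
    have "Nv r0 c0 (a, b)" using that Nv_iff by auto
    then have y: "Nv r0 c0 (Y (a, b))" "adjr (a, b) (Y (a, b))" using Y1 by auto
    obtain p q where pq: "Y (a, b) = (p, q)" by (cases "Y (a, b)") auto
    have h1: "(p = r1 \<or> p = r2) \<and> (q = c1 \<or> q = c2)" using y(1) Nv_iff[of "(p, q)"] pq by simp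
    have h2: "(a = p \<and> b \<noteq> q) \<or> (b = q \<and> a \<noteq> p)" using y(2) pq unfolding adjr_def by simp
    show ?thesis unfolding pq using h1 h2 that r(1) c(1) by auto
  qed
  show False
  proof (rule final_generic[of r1 r2 c1 c2 Y])
    show "r1 \<noteq> r2" using r(1) .
    show "c1 \<noteq> c2" using c(1) .
    show "Y (r1, c1) = (r1, c2) \<or> Y (r1, c1) = (r2, c1)" using opt[of r1 r2 c1 c2] by simp
    show "Y (r1, c2) = (r1, c1) \<or> Y (r1, c2) = (r2, c2)" using opt[of r1 r2 c2 c1] by simp
    show "Y (r2, c1) = (r2, c2) \<or> Y (r2, c1) = (r1, c1)" using opt[of r2 r1 c1 c2] by simp
    show "Y (r2, c2) = (r2, c1) \<or> Y (r2, c2) = (r1, c2)" using opt[of r2 r1 c2 c1] by simp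
    fix x x' assume xs: "x \<in> {(r1, c1), (r1, c2), (r2, c1), (r2, c2)}" "x' \<in> {(r1, c1), (r1, c2), (r2, c1), (r2, c2)}" "x \<noteq> x'"
    have n1: "Nv r0 c0 x" using xs(1) Nv_iff by auto
    have n2: "Nv r0 c0 x'" using xs(2) Nv_iff by auto
    show "Y x \<noteq> Y x' \<and> {x, Y x} \<noteq> {x', Y x'} \<and> (snd x, fst (Y x)) \<noteq> (snd x', fst (Y x'))"
      by (rule Y2[OF n1 n2 xs(3)])
  qed
qed

context
  fixes f :: "nat \<Rightarrow> nat \<times> nat" and P :: "nat \<Rightarrow> nat \<Rightarrow> (nat \<times> nat) list"
    and r0 c0 :: nat
  assumes imm: "toi_immersion XX 5 f P"
    and rc: "r0 < 3" "c0 < 3"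
    and cr: "\<forall>r<3. \<forall>c<3. ((r, c) \<in> f ` {..<5} \<longleftrightarrow> r = r0 \<or> c = c0)"
begin

lemma inT: "v \<in> VV \<Longrightarrow> (v \<in> f ` {..<5}) = (fst v = r0 \<or> snd v = c0)"
  using cr by (cases v) (auto simp: mem_VV)

lemma notT_Nv: "v \<in> VV \<Longrightarrow> (\<forall>l<5. v \<noteq> f l) \<longleftrightarrow> Nv r0 c0 v"
  using inT[of v] by (cases v) (auto simp: mem_VV Nv_def)

lemma Nv_VV: "Nv r0 c0 v \<Longrightarrow> v \<in> VV"
  by (cases v) (auto simp: mem_VV Nv_def)

lemma T_ex: "v \<in> VV \<Longrightarrow> fst v = r0 \<or> snd v = c0 \<Longrightarrow> \<exists>k<5. f k = v"
  using inT[of v] by auto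

lemma step:
  assumes x: "Nv r0 c0 x"
  shows "\<exists>y k m. Nv r0 c0 y \<and> adjr x y \<and> k < 5 \<and> m < 5 \<and> k \<noteq> m \<and> f k = (r0, snd x) \<and>
     f m = (fst y, c0) \<and> Qp P k m = [(r0, snd x), x, y, (fst y, c0)]"
proof -
  have xV: "x \<in> VV" using Nv_VV[OF x] .
  have xT: "\<forall>l<5. x \<noteq> f l" using notT_Nv[OF xV] x by simp
  have tV: "(r0, snd x) \<in> VV" using x rc by (cases x) (auto simp: Nv_def mem_VV)
  obtain k where k: "k < 5" "f k = (r0, snd x)" using T_ex[OF tV] by auto
  have e: "{f k, x} \<in> edges XX" unfolding edgeXX using k tV xV x by (cases x) (auto simp: adjr_def Nv_def)
  obtain m where m: "m < 5" "m \<noteq> k" "Qp P k m ! 1 = x" "4 \<le> length (Qp P k m)"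
    "\<forall>l<5. Qp P k m ! 2 \<noteq> f l" "{x, Qp P k m ! 2} \<in> edges XX" using L2[OF imm k(1) xT e] by blast
  define q where "q = Qp P k m"
  note QP = Qpos[OF imm k(1) m(1) m(2)[symmetric], folded q_def]
  define y where "y = q ! 2"
  have yV: "y \<in> VV" and xy: "adjr x y" using m(6) unfolding edgeXX y_def q_def by auto
  have y: "Nv r0 c0 y" using notT_Nv[OF yV] m(5) unfolding y_def q_def by simp
  have q1: "q ! 1 = x" using m(3) unfolding q_def by simp
  have l4: "4 \<le> length q" using m(4) unfolding q_def by simp
  have xny: "x \<noteq> y" using xy unfolding adjr_def by auto
  have len: "length q = 4"
  proof (rule ccontr)
    assume "length q \<noteq> 4"
    then have l6: "6 \<le> length q" using l4 QP(2) by (elim evenE) auto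
    define w where "w = q ! 3"
    have wT: "\<forall>l<5. w \<noteq> f l" using QP(6)[of 3] l6 unfolding w_def by simp
    have "{q ! 2, q ! Suc 2} \<in> edges XX" using QP(7)[of 2] l6 by simp
    then have ew: "{y, w} \<in> edges XX" unfolding y_def w_def by (simp add: numeral_3_eq_3 numeral_2_eq_2)
    then have wV: "w \<in> VV" and yw: "adjr y w" unfolding edgeXX by auto
    have w: "Nv r0 c0 w" using notT_Nv[OF wV] wT by simp
    have "q ! 1 \<noteq> q ! 3" using nth_eq_iff_index_eq[OF QP(5), of 1 3] l6 by simp
    then have xw: "x \<noteq> w" using q1 unfolding w_def by simp
    have tyV: "(r0, snd y) \<in> VV" using y rc by (cases y) (auto simp: Nv_def mem_VV)
    obtain k' where k': "k' < 5" "f k' = (r0, snd y)" using T_ex[OF tyV] by auto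
    have e': "{f k', y} \<in> edges XX" unfolding edgeXX using k' tyV yV y by (cases y) (auto simp: adjr_def Nv_def)
    have yT: "\<forall>l<5. y \<noteq> f l" using notT_Nv[OF yV] y by simp
    obtain m' where m': "m' < 5" "m' \<noteq> k'" "Qp P k' m' ! 1 = y" "4 \<le> length (Qp P k' m')"
      "\<forall>l<5. Qp P k' m' ! 2 \<noteq> f l" "{y, Qp P k' m' ! 2} \<in> edges XX" using L2[OF imm k'(1) yT e'] by blast
    define z where "z = Qp P k' m' ! 2"
    have zV: "z \<in> VV" and yz: "adjr y z" using m'(6) unfolding edgeXX z_def by auto
    have z: "Nv r0 c0 z" using notT_Nv[OF zV] m'(5) unfolding z_def by simp
    have zz: "z = x \<or> z = w" using NN2[OF rc y x w z _ yw yz xw] xy adjr_sym by metis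
    note QP' = Qpos[OF imm k'(1) m'(1) m'(2)[symmetric]]
    have "{Qp P k' m' ! 1, Qp P k' m' ! Suc 1} \<in> path_edges (Qp P k' m')" using QP'(8)[of 1] m'(4) by simp
    then have ez': "{y, z} \<in> path_edges (Qp P k' m')" using m'(3) unfolding z_def by (simp add: numeral_2_eq_2)
    have "{q ! 1, q ! Suc 1} \<in> path_edges q" "{q ! 2, q ! Suc 2} \<in> path_edges q"
      using QP(8)[of 1] QP(8)[of 2] l6 by simp_all
    then have "{x, y} \<in> path_edges q" "{y, w} \<in> path_edges q" using q1 unfolding y_def w_def
      by (simp_all add: numeral_2_eq_2 numeral_3_eq_3)
    then have ez: "{y, z} \<in> path_edges q" using zz by (auto simp: insert_commute)
    have kk: "{k', m'} = {k, m}" using Q2'[OF imm k'(1) m'(1) k(1) m(1) m'(2)[symmetric] m(2)[symmetric] ez' ez[unfolded q_def]] .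
    show False
    proof (cases "k' = k")
      case True
      then have "m' = m" using kk m'(2) by (auto simp: doubleton_eq_iff)
      then have "y = x" using m'(3) True q1 unfolding q_def by simp
      then show False using xny by simp
    next
      case False
      then have "k' = m" "m' = k" using kk by (auto simp: doubleton_eq_iff)
      then have "Qp P k' m' = rev q" unfolding q_def using Q_rev[OF imm, of k m] m(2) by simp
      then have "rev q ! 1 = y" using m'(3) by simp
      then have "q ! (length q - Suc 1) = q ! 2" using rev_nth[of 1 q] l6 unfolding y_def by simp
      moreover have "length q - Suc 1 < length q" "2 < length q" using l6 by simp_all
      ultimately have "length q - Suc 1 = 2" using nth_eq_iff_index_eq[OF QP(5)] by blast
      then show False using l6 by simp
    qed
  qed
  have q3: "q ! 3 = f m" using QP(4) len by simp
  have "{q ! 2, q ! Suc 2} \<in> edges XX" using QP(7)[of 2] len by simp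
  then have eyf: "{y, f m} \<in> edges XX" using q3 unfolding y_def by (simp add: numeral_3_eq_3 numeral_2_eq_2)
  then have fmV: "f m \<in> VV" and yfm: "adjr y (f m)" unfolding edgeXX by auto
  have "fst (f m) = r0 \<or> snd (f m) = c0" using inT[OF fmV] m(1) by auto
  then have fm2: "f m = (r0, snd y) \<or> f m = (fst y, c0)" using NT[OF y yfm] by simp
  have fm: "f m = (fst y, c0)"
  proof (rule ccontr)
    assume "f m \<noteq> (fst y, c0)"
    then have fmt: "f m = (r0, snd y)" using fm2 by simp
    have "f k \<noteq> f m" using finj[OF imm k(1) m(1)] m(2) by auto
    then have "adjr (f k) (f m)" using k(2) fmt unfolding adjr_def by auto
    then have "{f k, f m} \<in> edges XX" unfolding edgeXX using fV[OF imm k(1)] fmV by simp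
    then obtain m'' where m'': "m'' < 5" "m'' \<noteq> k" "Qp P k m'' ! 1 = f m" using sat[OF imm k(1)] by blast
    note QP'' = Qpos[OF imm k(1) m''(1) m''(2)[symmetric]]
    have "\<not> Suc 1 < length (Qp P k m'')" using QP''(6)[of 1 m] m''(3) m(1) by auto
    then have "length (Qp P k m'') = 2" using QP''(1) by simp
    then have "Qp P k m'' ! 1 = f m''" using QP''(4) by simp
    then have "m'' = m" using finj[OF imm m''(1) m(1)] m''(3) by simp
    then have "q ! 1 = f m" using m''(3) unfolding q_def by simp
    then show False using q1 xT m(1) by auto
  qed
  have "q = [q ! 0, q ! 1, q ! 2, q ! 3]" using len4_list[OF len] .
  then have "q = [(r0, snd x), x, y, (fst y, c0)]" using QP(3) k(2) q1 q3 fm unfolding y_def by simp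
  then show ?thesis using y xy k m(1,2) fm unfolding q_def by blast
qed

end

lemma path_edges4: "path_edges [a, b, c, d] = {{a, b}, {b, c}, {c, d}}" by simp

lemma no_K5: "\<not> toi_immersion XX 5 f P"
proof
  assume imm: "toi_immersion XX 5 f P"
  obtain r0 c0 where rc: "r0 < 3" "c0 < 3" and cr: "\<forall>r<3. \<forall>c<3. ((r, c) \<in> f ` {..<5} \<longleftrightarrow> r = r0 \<or> c = c0)"
    using cross_imm[OF imm] by blast
  note st = step[OF imm rc cr]
  have "\<forall>x. \<exists>ykm. Nv r0 c0 x \<longrightarrow> (Nv r0 c0 (fst ykm) \<and> adjr x (fst ykm) \<and> fst (snd ykm) < 5 \<and>
     snd (snd ykm) < 5 \<and> fst (snd ykm) \<noteq> snd (snd ykm) \<and> f (fst (snd ykm)) = (r0, snd x) \<and>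
     f (snd (snd ykm)) = (fst (fst ykm), c0) \<and>
     Qp P (fst (snd ykm)) (snd (snd ykm)) = [(r0, snd x), x, fst ykm, (fst (fst ykm), c0)])"
  proof
    fix x
    show "\<exists>ykm. Nv r0 c0 x \<longrightarrow> (Nv r0 c0 (fst ykm) \<and> adjr x (fst ykm) \<and> fst (snd ykm) < 5 \<and>
     snd (snd ykm) < 5 \<and> fst (snd ykm) \<noteq> snd (snd ykm) \<and> f (fst (snd ykm)) = (r0, snd x) \<and>
     f (snd (snd ykm)) = (fst (fst ykm), c0) \<and>
     Qp P (fst (snd ykm)) (snd (snd ykm)) = [(r0, snd x), x, fst ykm, (fst (fst ykm), c0)])"
    proof (cases "Nv r0 c0 x")
      case True
      then obtain y k m where "Nv r0 c0 y \<and> adjr x y \<and> k < 5 \<and> m < 5 \<and> k \<noteq> m \<and> f k = (r0, snd x) \<and>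
        f m = (fst y, c0) \<and> Qp P k m = [(r0, snd x), x, y, (fst y, c0)]" using st by blast
      then show ?thesis by (intro exI[of _ "(y, k, m)"]) simp
    next
      case False then show ?thesis by simp
    qed
  qed
  then have "\<exists>G. \<forall>x. Nv r0 c0 x \<longrightarrow> (Nv r0 c0 (fst (G x)) \<and> adjr x (fst (G x)) \<and> fst (snd (G x)) < 5 \<and>
     snd (snd (G x)) < 5 \<and> fst (snd (G x)) \<noteq> snd (snd (G x)) \<and> f (fst (snd (G x))) = (r0, snd x) \<and>
     f (snd (snd (G x))) = (fst (fst (G x)), c0) \<and>
     Qp P (fst (snd (G x))) (snd (snd (G x))) = [(r0, snd x), x, fst (G x), (fst (fst (G x)), c0)])" by (rule choice)
  then obtain G where G0: "\<forall>x. Nv r0 c0 x \<longrightarrow> (Nv r0 c0 (fst (G x)) \<and> adjr x (fst (G x)) \<and> fst (snd (G x)) < 5 \<and>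
     snd (snd (G x)) < 5 \<and> fst (snd (G x)) \<noteq> snd (snd (G x)) \<and> f (fst (snd (G x))) = (r0, snd x) \<and>
     f (snd (snd (G x))) = (fst (fst (G x)), c0) \<and>
     Qp P (fst (snd (G x))) (snd (snd (G x))) = [(r0, snd x), x, fst (G x), (fst (fst (G x)), c0)])" by (rule exE)
  note G = G0[rule_format]
  define Y where "Y x = fst (G x)" for x
  define K where "K x = fst (snd (G x))" for x
  define M where "M x = snd (snd (G x))" for x
  have G': "Nv r0 c0 (Y x) \<and> adjr x (Y x) \<and> K x < 5 \<and> M x < 5 \<and> K x \<noteq> M x \<and> f (K x) = (r0, snd x) \<and>
     f (M x) = (fst (Y x), c0) \<and> Qp P (K x) (M x) = [(r0, snd x), x, Y x, (fst (Y x), c0)]" if "Nv r0 c0 x" for x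
    unfolding Y_def K_def M_def by (rule G[OF that])
  have G1: "Nv r0 c0 (Y x)" if "Nv r0 c0 x" for x
    using G'[OF that] by (elim conjE) assumption
  have G2: "adjr x (Y x)" if "Nv r0 c0 x" for x
    using G'[OF that] by (elim conjE) assumption
  have G3: "K x < 5" if "Nv r0 c0 x" for x
    using G'[OF that] by (elim conjE) assumption
  have G4: "M x < 5" if "Nv r0 c0 x" for x
    using G'[OF that] by (elim conjE) assumption
  have G5: "K x \<noteq> M x" if "Nv r0 c0 x" for x
    using G'[OF that] by (elim conjE) assumption
  have G6: "f (K x) = (r0, snd x)" if "Nv r0 c0 x" for x
    using G'[OF that] by (elim conjE) assumption
  have G7: "f (M x) = (fst (Y x), c0)" if "Nv r0 c0 x" for x
    using G'[OF that] by (elim conjE) assumption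
  have G8: "Qp P (K x) (M x) = [(r0, snd x), x, Y x, (fst (Y x), c0)]" if "Nv r0 c0 x" for x
    using G'[OF that] by (elim conjE) assumption
  show False
  proof (rule final_contra[OF rc, of Y])
    fix x assume xn: "Nv r0 c0 x" show "Nv r0 c0 (Y x) \<and> adjr x (Y x)" using G1[OF xn] G2[OF xn] by (rule conjI)
  next
    fix x x' assume x: "Nv r0 c0 x" and x': "Nv r0 c0 x'" and xx: "x \<noteq> x'"
    have ne: "{K x, M x} \<noteq> {K x', M x'}"
    proof
      assume eq: "{K x, M x} = {K x', M x'}"
      show False
      proof (cases "K x = K x'")
        case True
        then have "M x = M x'" using eq G5[OF x] G5[OF x'] by (auto simp: doubleton_eq_iff)
        then have "Qp P (K x) (M x) = Qp P (K x') (M x')" using True by simp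
        then have "[(r0, snd x), x, Y x, (fst (Y x), c0)] = [(r0, snd x'), x', Y x', (fst (Y x'), c0)]"
          unfolding G8[OF x] G8[OF x'] .
        then have "x = x'" by simp
        then show False using xx by simp
      next
        case False
        then have "K x = M x'" using eq by (auto simp: doubleton_eq_iff)
        then have "(r0, snd x) = (fst (Y x'), c0)" using G6[OF x] G7[OF x'] by simp
        then have "fst (Y x') = r0" by simp
        then show False using G1[OF x'] unfolding Nv_def by simp
      qed
    qed
    have "path_edges (Qp P (K x) (M x)) \<inter> path_edges (Qp P (K x') (M x')) = {}"
      by (rule Q2[OF imm G3[OF x] G4[OF x] G3[OF x'] G4[OF x'] G5[OF x] G5[OF x'] ne])
    then have disj: "{{(r0, snd x), x}, {x, Y x}, {Y x, (fst (Y x), c0)}} \<inter>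
        {{(r0, snd x'), x'}, {x', Y x'}, {Y x', (fst (Y x'), c0)}} = {}"
      unfolding G8[OF x] G8[OF x'] path_edges4 .
    have "Y x \<noteq> Y x'"
    proof
      assume "Y x = Y x'"
      then have "{Y x, (fst (Y x), c0)} \<in> {{(r0, snd x), x}, {x, Y x}, {Y x, (fst (Y x), c0)}} \<inter>
        {{(r0, snd x'), x'}, {x', Y x'}, {Y x', (fst (Y x'), c0)}}" by simp
      then show False using disj by blast
    qed
    moreover have "{x, Y x} \<noteq> {x', Y x'}"
    proof
      assume "{x, Y x} = {x', Y x'}"
      then have "{x, Y x} \<in> {{(r0, snd x), x}, {x, Y x}, {Y x, (fst (Y x), c0)}} \<inter>
        {{(r0, snd x'), x'}, {x', Y x'}, {Y x', (fst (Y x'), c0)}}" by simp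
      then show False using disj by blast
    qed
    moreover have "(snd x, fst (Y x)) \<noteq> (snd x', fst (Y x'))"
    proof
      assume "(snd x, fst (Y x)) = (snd x', fst (Y x'))"
      then have "f (K x) = f (K x')" "f (M x) = f (M x')" using G6[OF x] G6[OF x'] G7[OF x] G7[OF x'] by simp_all
      then have "K x = K x'" "M x = M x'" using finj[OF imm] G3[OF x] G3[OF x'] G4[OF x] G4[OF x'] by blast+
      then show False using ne by simp
    qed
    ultimately show "Y x \<noteq> Y x' \<and> {x, Y x} \<noteq> {x', Y x'} \<and> (snd x, fst (Y x)) \<noteq> (snd x', fst (Y x'))" by blast
  qed
qed

lemma imm_restrict: "toi_immersion G t f P \<Longrightarrow> s \<le> t \<Longrightarrow> toi_immersion G s f P"
  unfolding toi_immersion_def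
  apply (intro conjI)
  subgoal by (meson inj_on_subset lessThan_subset_iff)
  subgoal by fastforce
  subgoal by (meson less_le_trans)
  subgoal by (meson less_le_trans)
  done

lemma K3_simple: "simple_graph K3"
proof -
  have a: "\<exists>u v. {a, b} = {u, v} \<and> u \<noteq> v \<and> u \<in> {0, 1, 2} \<and> v \<in> {0, 1, 2}"
    if "a \<in> {0,1,2::nat}" "b \<in> {0,1,2}" "a \<noteq> b" for a b
    using that by blast
  show ?thesis unfolding simple_graph_def K3_def verts_def edges_def fst_conv snd_conv
    using a by auto
qed

lemma K3_connected: "connected_graph K3"
  unfolding connected_graph_def
proof (rule conjI)
  show "verts K3 \<noteq> {}" by (simp add: vK3)
  show "\<forall>u\<in>verts K3. \<forall>v\<in>verts K3. \<exists>p. is_path K3 p \<and> hd p = u \<and> last p = v"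
  proof (intro ballI)
    fix u v assume uv: "u \<in> verts K3" "v \<in> verts K3"
    show "\<exists>p. is_path K3 p \<and> hd p = u \<and> last p = v"
    proof (cases "u = v")
      case True
      then show ?thesis using uv by (intro exI[of _ "[u]"]) (simp add: is_path_def)
    next
      case False
      have "{u, v} \<in> edges K3" using uv False unfolding K3_edge vK3 by simp
      then show ?thesis using uv False by (intro exI[of _ "[u, v]"]) (simp add: is_path_def)
    qed
  qed
qed

lemma K3_has3: "has_toi K3 3"
proof -
  have "toi_immersion K3 3 id (\<lambda>i j. [i, j])"
    unfolding toi_immersion_def
    apply (intro conjI)
    subgoal by simp
    subgoal by (auto simp: vK3)
    subgoal
    proof (intro allI impI)
      fix i j :: nat assume ij: "i < j \<and> j < 3"
      then have "{i, j} \<in> edges K3" unfolding K3_edge by auto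
      then show "is_path K3 [i, j] \<and> hd [i, j] = id i \<and> last [i, j] = id j \<and>
          odd (length [i, j] - 1) \<and> (\<forall>k<3. id k \<notin> interior [i, j])"
        using ij by (auto simp: is_path_def vK3 interior_def)
    qed
    subgoal by (auto simp: doubleton_eq_iff)
    done
  then show ?thesis unfolding has_toi_def by blast
qed

lemma K3_toi: "toi K3 = 3"
proof -
  have fin: "finite (verts K3)" by (simp add: vK3)
  have "card (verts K3) = 3" by (simp add: vK3)
  then have "\<And>t. has_toi K3 t \<Longrightarrow> t \<le> 3" using has_toi_bound[OF fin] by metis
  then show ?thesis using toi_ge[OF fin K3_has3] toi_has[OF fin] by (meson le_antisym)
qed

lemma XX_toi: "toi XX = 4"
proof -
  have fin: "finite (verts XX)" by (simp add: vertsXX finite_VV)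
  have ge: "4 \<le> toi XX" using part1[OF K3_simple K3_simple K3_toi K3_toi] .
  have "toi XX \<le> 4"
  proof (rule ccontr)
    assume "\<not> toi XX \<le> 4"
    then have "5 \<le> toi XX" by simp
    moreover obtain f P where "toi_immersion XX (toi XX) f P" using toi_has[OF fin] unfolding has_toi_def by blast
    ultimately have "toi_immersion XX 5 f P" using imm_restrict by blast
    then show False using no_K5 by blast
  qed
  then show ?thesis using ge by simp
qed

theorem mainTheorem6:
  shows "(\<forall>(G :: 'a graph) (H :: 'b graph).
            simple_graph G \<and> simple_graph H \<and> connected_graph G \<and> connected_graph H \<and>
            toi G = 3 \<and> toi H = 3 \<longrightarrow> 4 \<le> toi (cart_prod G H))
         \<and> toi (cart_prod K3 K3) = 4"
  using part1 XX_toi by blast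

end
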